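(* Let $d\ge1$ and let $\{X_{\mathbf k};\ \mathbf k\in\mathbb N^d\}$ be a negatively associated field of random variables with $\mathbb E X_{\mathbf k}=0$ for all $\mathbf k$, and uniformly bounded: there is $0<b<\infty$ with $|X_{\mathbf k}|\le b$ a.s. for all $\mathbf k$. Let $S_{\mathbf n}=\sum_{\mathbf k\le\mathbf n}X_{\mathbf k}$. Then for any $\delta>0$, $$\limsup_{\mathbf n\to\infty}\frac{\max_{\mathbf k\le\delta\mathbf n}|S_{\mathbf n+\mathbf k}-S_{\mathbf n}|}{(2d|\mathbf n|\log\log|\mathbf n|)^{1/2}}\le 80d\big(\delta(1+2\delta)^d\big)^{1/2}\sup_{\mathbf k}(\mathbb E X_{\mathbf k}^2)^{1/2}\quad\text{a.s.}$$
   Context: A finite family of random variables is negatively associated if for every pair of disjoint index subsets $A,B$, $\operatorname{Cov}(f(X_i;i\in A),g(X_j;j\in B))\le 0$ whenever $f,g$ are coordinatewise non-decreasing and the covariance exists; an infinite family is negatively associated if every finite subfamily is. For $\mathbf n=(n_1,\dots,n_d)\in\mathbb N^d$, $|\mathbf n|=n_1\cdots n_d$; $\mathbf k\le\mathbf n$ means $k_i\le n_i$ for all $i$; $\delta\mathbf n=(\delta n_1,\dots,\delta n_d)$ and the maximum is over $\mathbf k\in\mathbb N^d$ with $\mathbf k\le\delta\mathbf n$; $\mathbf n\to\infty$ means $n_1\to\infty,\dots,n_d\to\infty$. Throughout, $\log x=\ln(x\vee e)$. *)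

theory Defs
  imports "HOL-Probability.Probability"
begin

text \<open>Index set N^d with N = {1,2,...}; multi-indices are functions 'd => nat
  on a finite type 'd, with d = CARD('d).\<close>

definition posidx :: "('d::finite \<Rightarrow> nat) set" where
  "posidx = {k. \<forall>i. 1 \<le> k i}"

text \<open>A function f of (X_i; i in A)
  is modelled as f applied to the restriction of the vector to A; coordinatewise
  non-decreasing on the coordinates in A; "covariance exists" = f(X_A), g(X_B) and their
  product are integrable.\<close>

definition coord_nondecr :: "'i set \<Rightarrow> (('i \<Rightarrow> real) \<Rightarrow> real) \<Rightarrow> bool" where
  "coord_nondecr A f \<longleftrightarrow>
     (\<forall>x y. (\<forall>i\<in>A. x i \<le> y i) \<longrightarrow> f (restrict x A) \<le> f (restrict y A))"

definition neg_assoc :: "'a measure \<Rightarrow> ('i \<Rightarrow> 'a \<Rightarrow> real) \<Rightarrow> 'i set \<Rightarrow> bool" where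
  "neg_assoc M X I \<longleftrightarrow>
     (\<forall>A B f g. finite A \<and> finite B \<and> A \<subseteq> I \<and> B \<subseteq> I \<and> A \<inter> B = {} \<and>
        coord_nondecr A f \<and> coord_nondecr B g \<and>
        integrable M (\<lambda>\<omega>. f (\<lambda>i\<in>A. X i \<omega>)) \<and>
        integrable M (\<lambda>\<omega>. g (\<lambda>i\<in>B. X i \<omega>)) \<and>
        integrable M (\<lambda>\<omega>. f (\<lambda>i\<in>A. X i \<omega>) * g (\<lambda>i\<in>B. X i \<omega>))
      \<longrightarrow> (LINT \<omega>|M. f (\<lambda>i\<in>A. X i \<omega>) * g (\<lambda>i\<in>B. X i \<omega>))
          - (LINT \<omega>|M. f (\<lambda>i\<in>A. X i \<omega>)) * (LINT \<omega>|M. g (\<lambda>i\<in>B. X i \<omega>)) \<le> 0)"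

definition Lg :: "real \<Rightarrow> real" where
  "Lg x = ln (max x (exp 1))"

text \<open>n \<rightarrow> \<infinity>: every coordinate tends to infinity.\<close>
definition multi_at_top :: "('d::finite \<Rightarrow> nat) filter" where
  "multi_at_top = (INF i. filtercomap (\<lambda>n. n i) at_top)"

definition partial_sum :: "(('d::finite \<Rightarrow> nat) \<Rightarrow> 'a \<Rightarrow> real) \<Rightarrow> ('d \<Rightarrow> nat) \<Rightarrow> 'a \<Rightarrow> real" where
  "partial_sum X n \<omega> = (\<Sum>k\<in>{k\<in>posidx. \<forall>i. k i \<le> n i}. X k \<omega>)"

definition max_incr :: "(('d::finite \<Rightarrow> nat) \<Rightarrow> 'a \<Rightarrow> real) \<Rightarrow> real \<Rightarrow> ('d \<Rightarrow> nat) \<Rightarrow> 'a \<Rightarrow> real" where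
  "max_incr X \<delta> n \<omega> = Max ({\<bar>partial_sum X (\<lambda>i. n i + k i) \<omega> - partial_sum X n \<omega>\<bar> | k.
        k \<in> posidx \<and> (\<forall>i. real (k i) \<le> \<delta> * real (n i))} \<union> {0})"

end

theory Submission
  imports Defs
begin

locale NAfield = prob_space M for M :: "'a measure" +
  fixes X :: "('d::finite \<Rightarrow> nat) \<Rightarrow> 'a \<Rightarrow> real" and b :: real
  assumes meas: "\<And>k. k \<in> posidx \<Longrightarrow> X k \<in> borel_measurable M"
  and na: "neg_assoc M X posidx"
  and mean0: "\<And>k. k \<in> posidx \<Longrightarrow> (LINT \<omega>|M. X k \<omega>) = 0"
  and bpos: "0 < b"
  and bnd: "\<And>k. k \<in> posidx \<Longrightarrow> (AE \<omega> in M. \<bar>X k \<omega>\<bar> \<le> b)"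
begin

lemma AE_bnd_fin: "finite K \<Longrightarrow> K \<subseteq> posidx \<Longrightarrow> AE \<omega> in M. \<forall>k\<in>K. \<bar>X k \<omega>\<bar> \<le> b"
  using bnd by (subst AE_finite_all) auto

lemma sum_meas: "K \<subseteq> posidx \<Longrightarrow> (\<lambda>\<omega>. \<Sum>k\<in>K. X k \<omega>) \<in> borel_measurable M"
  using meas by (intro borel_measurable_sum) auto

lemma exp_sum_integrable:
  assumes "finite K" "K \<subseteq> posidx"
  shows "integrable M (\<lambda>\<omega>. exp (t * (\<Sum>k\<in>K. X k \<omega>)))"
proof (rule integrable_const_bound[where B="exp (\<bar>t\<bar> * (b * card K))"])
  show "AE \<omega> in M. norm (exp (t * (\<Sum>k\<in>K. X k \<omega>))) \<le> exp (\<bar>t\<bar> * (b * card K))"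
    using AE_bnd_fin[OF assms]
  proof eventually_elim
    case (elim \<omega>)
    have "\<bar>\<Sum>k\<in>K. X k \<omega>\<bar> \<le> (\<Sum>k\<in>K. \<bar>X k \<omega>\<bar>)" by (rule sum_abs)
    also have "\<dots> \<le> (\<Sum>k\<in>K. b)" using elim by (intro sum_mono) auto
    finally have "\<bar>\<Sum>k\<in>K. X k \<omega>\<bar> \<le> b * card K" by (simp add: mult.commute)
    then have "t * (\<Sum>k\<in>K. X k \<omega>) \<le> \<bar>t\<bar> * (b * card K)"
      by (metis abs_ge_self abs_mult abs_of_nonneg dual_order.trans mult_left_mono abs_ge_zero)
    then show ?case by simp
  qed
  show "(\<lambda>\<omega>. exp (t * (\<Sum>k\<in>K. X k \<omega>))) \<in> borel_measurable M"
    using sum_meas[OF assms(2)] by measurable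
qed

lemma na_exp_step:
  assumes "finite K" "K \<subseteq> posidx" "k0 \<in> posidx" "k0 \<notin> K"
  shows "(LINT \<omega>|M. exp (t * (\<Sum>k\<in>insert k0 K. X k \<omega>)))
     \<le> (LINT \<omega>|M. exp (t * (\<Sum>k\<in>K. X k \<omega>))) * (LINT \<omega>|M. exp (t * X k0 \<omega>))"
proof -
  define s :: real where "s = (if 0 \<le> t then 1 else -1)"
  have s2: "s * s = 1" by (simp add: s_def)
  define f where "f = (\<lambda>x::('d\<Rightarrow>nat)\<Rightarrow>real. s * exp (t * (\<Sum>i\<in>K. x i)))"
  define g where "g = (\<lambda>x::('d\<Rightarrow>nat)\<Rightarrow>real. s * exp (t * x k0))"
  have mono: "s * exp (t * u) \<le> s * exp (t * v)" if "u \<le> v" for u v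
  proof (cases "0 \<le> t")
    case True then show ?thesis using that by (simp add: s_def mult_left_mono)
  next
    case False then have "t * v \<le> t * u" using that by (simp add: mult_left_mono_neg)
    then show ?thesis using False by (simp add: s_def)
  qed
  have cf: "coord_nondecr K f"
    unfolding coord_nondecr_def f_def
    by (auto intro!: mono sum_mono)
  have cg: "coord_nondecr {k0} g"
    unfolding coord_nondecr_def g_def by (auto intro!: mono)
  have fX: "f (\<lambda>i\<in>K. X i \<omega>) = s * exp (t * (\<Sum>k\<in>K. X k \<omega>))" for \<omega>
    unfolding f_def by simp
  have gX: "g (\<lambda>i\<in>{k0}. X i \<omega>) = s * exp (t * X k0 \<omega>)" for \<omega>
    unfolding g_def by simp
  have prod: "f (\<lambda>i\<in>K. X i \<omega>) * g (\<lambda>i\<in>{k0}. X i \<omega>) = exp (t * (\<Sum>k\<in>insert k0 K. X k \<omega>))" for \<omega>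
    unfolding fX gX using assms(1,4) s2
    by (simp add: algebra_simps exp_add[symmetric])
  have i1: "integrable M (\<lambda>\<omega>. exp (t * (\<Sum>k\<in>K. X k \<omega>)))"
    by (rule exp_sum_integrable[OF assms(1,2)])
  have i2: "integrable M (\<lambda>\<omega>. exp (t * X k0 \<omega>))"
    using exp_sum_integrable[of "{k0}" t] assms by simp
  have i3: "integrable M (\<lambda>\<omega>. exp (t * (\<Sum>k\<in>insert k0 K. X k \<omega>)))"
    using exp_sum_integrable[of "insert k0 K" t] assms by simp
  have i4: "integrable M (\<lambda>\<omega>. f (\<lambda>i\<in>K. X i \<omega>))" unfolding fX using i1 by simp
  have i5: "integrable M (\<lambda>\<omega>. g (\<lambda>i\<in>{k0}. X i \<omega>))" unfolding gX using i2 by simp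
  have i6: "integrable M (\<lambda>\<omega>. f (\<lambda>i\<in>K. X i \<omega>) * g (\<lambda>i\<in>{k0}. X i \<omega>))" unfolding prod by (rule i3)
  have cov: "(LINT \<omega>|M. f (\<lambda>i\<in>K. X i \<omega>) * g (\<lambda>i\<in>{k0}. X i \<omega>))
          - (LINT \<omega>|M. f (\<lambda>i\<in>K. X i \<omega>)) * (LINT \<omega>|M. g (\<lambda>i\<in>{k0}. X i \<omega>)) \<le> 0"
    apply (rule na[unfolded neg_assoc_def, rule_format, of K "{k0}" f g])
    using assms cf cg i4 i5 i6 by auto
  have "(LINT \<omega>|M. exp (t * (\<Sum>k\<in>insert k0 K. X k \<omega>)))
     - (s * (LINT \<omega>|M. exp (t * (\<Sum>k\<in>K. X k \<omega>)))) * (s * (LINT \<omega>|M. exp (t * X k0 \<omega>))) \<le> 0"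
    using cov[unfolded prod, unfolded fX gX integral_mult_right_zero] .
  moreover have "(s * A) * (s * B) = A * B" for A B :: real
    using s2 by (metis mult.assoc mult.left_commute mult_1)
  ultimately show ?thesis by simp
qed

lemma na_exp_prod:
  assumes "finite K" "K \<subseteq> posidx"
  shows "(LINT \<omega>|M. exp (t * (\<Sum>k\<in>K. X k \<omega>))) \<le> (\<Prod>k\<in>K. LINT \<omega>|M. exp (t * X k \<omega>))"
  using assms
proof (induction K rule: finite_induct)
  case empty then show ?case by simp
next
  case (insert k0 K)
  have "(LINT \<omega>|M. exp (t * (\<Sum>k\<in>insert k0 K. X k \<omega>)))
     \<le> (LINT \<omega>|M. exp (t * (\<Sum>k\<in>K. X k \<omega>))) * (LINT \<omega>|M. exp (t * X k0 \<omega>))"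
    using insert by (intro na_exp_step) auto
  also have "\<dots> \<le> (\<Prod>k\<in>K. LINT \<omega>|M. exp (t * X k \<omega>)) * (LINT \<omega>|M. exp (t * X k0 \<omega>))"
    using insert by (intro mult_right_mono) (auto intro!: integral_nonneg_AE)
  finally show ?case using insert by (simp add: mult.commute)
qed

lemma exp_le_quad: "\<bar>x::real\<bar> \<le> 1 \<Longrightarrow> exp x \<le> 1 + x + x\<^sup>2"
proof (cases "0 \<le> x")
  case True
  assume "\<bar>x\<bar> \<le> 1" then show ?thesis using exp_bound[of x] True by simp
next
  case False
  assume a: "\<bar>x\<bar> \<le> 1"
  have "1 - x \<le> exp (-x)" using exp_ge_add_one_self[of "-x"] by simp
  then have "exp x * (1 - x) \<le> 1" by (simp add: exp_minus field_simps)
  moreover have "1 \<le> (1 + x + x\<^sup>2) * (1 - x)"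
  proof -
    have "x * x * x \<le> 0" using False mult_nonneg_nonpos[of "x*x" x] by simp
    then have "x ^ 3 \<le> 0" by (simp add: power3_eq_cube)
    then show ?thesis by (simp add: algebra_simps power2_eq_square power3_eq_cube)
  qed
  moreover have "0 < 1 - x" using False by simp
  ultimately have "exp x * (1 - x) \<le> (1 + x + x\<^sup>2) * (1 - x)" by linarith
  then show ?thesis using \<open>0 < 1 - x\<close> by (simp only: mult_le_cancel_right_pos)
qed

lemma sq_le_helper: "\<bar>x::real\<bar> \<le> c \<Longrightarrow> x\<^sup>2 \<le> c\<^sup>2"
  using power_mono[of "\<bar>x\<bar>" c 2] by simp

lemma sqrt_le_helper: "0 \<le> (a::real) \<Longrightarrow> sqrt a \<le> s \<Longrightarrow> a \<le> s\<^sup>2"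
  using power_mono[of "sqrt a" s 2] by simp

definition sig :: real where "sig = (SUP k\<in>posidx. sqrt (LINT \<omega>|M. (X k \<omega>)\<^sup>2))"

lemma sq_integrable: "k \<in> posidx \<Longrightarrow> integrable M (\<lambda>\<omega>. (X k \<omega>)\<^sup>2)"
proof (rule integrable_const_bound[where B="b\<^sup>2"])
  assume k: "k \<in> posidx"
  show "AE \<omega> in M. norm ((X k \<omega>)\<^sup>2) \<le> b\<^sup>2" using bnd[OF k]
    by eventually_elim (simp add: sq_le_helper)
  show "(\<lambda>\<omega>. (X k \<omega>)\<^sup>2) \<in> borel_measurable M" using meas[OF k] by measurable
qed

lemma var_le_b: "k \<in> posidx \<Longrightarrow> (LINT \<omega>|M. (X k \<omega>)\<^sup>2) \<le> b\<^sup>2"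
proof -
  assume k: "k \<in> posidx"
  have "(LINT \<omega>|M. (X k \<omega>)\<^sup>2) \<le> (LINT \<omega>|M. b\<^sup>2)"
    apply (rule integral_mono_AE[OF sq_integrable[OF k]])
     apply simp
    using bnd[OF k] apply eventually_elim
    by (simp add: sq_le_helper)
  then show ?thesis by (simp add: prob_space)
qed

lemma bdd_sig: "bdd_above ((\<lambda>k. sqrt (LINT \<omega>|M. (X k \<omega>)\<^sup>2)) ` posidx)"
proof (rule bdd_aboveI2[where M=b])
  fix k assume k: "k \<in> (posidx::('d\<Rightarrow>nat) set)"
  have "sqrt (LINT \<omega>|M. (X k \<omega>)\<^sup>2) \<le> sqrt (b\<^sup>2)" by (rule real_sqrt_le_mono[OF var_le_b[OF k]])
  then show "sqrt (LINT \<omega>|M. (X k \<omega>)\<^sup>2) \<le> b" using bpos by simp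
qed

lemma posidx_ne: "(posidx::('d\<Rightarrow>nat) set) \<noteq> {}"
proof -
  have "(\<lambda>_. 1) \<in> (posidx::('d\<Rightarrow>nat) set)" by (simp add: posidx_def)
  then show ?thesis by auto
qed

lemma var_le_sig: "k \<in> posidx \<Longrightarrow> (LINT \<omega>|M. (X k \<omega>)\<^sup>2) \<le> sig\<^sup>2"
proof -
  assume k: "k \<in> posidx"
  have "sqrt (LINT \<omega>|M. (X k \<omega>)\<^sup>2) \<le> sig" unfolding sig_def
    by (rule cSUP_upper[OF k bdd_sig])
  moreover have "0 \<le> (LINT \<omega>|M. (X k \<omega>)\<^sup>2)" by (rule integral_nonneg_AE) auto
  ultimately show ?thesis by (simp add: sqrt_le_helper)
qed

lemma sig_nonneg: "0 \<le> sig"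
proof -
  obtain k where k: "k \<in> (posidx::('d\<Rightarrow>nat) set)" using posidx_ne by blast
  have "sqrt (LINT \<omega>|M. (X k \<omega>)\<^sup>2) \<le> sig" unfolding sig_def
    by (rule cSUP_upper[OF k bdd_sig])
  moreover have "0 \<le> (LINT \<omega>|M. (X k \<omega>)\<^sup>2)" by (rule integral_nonneg_AE) auto
  ultimately show ?thesis by (meson order_trans real_sqrt_ge_zero)
qed

lemma exp_one:
  assumes k: "k \<in> posidx" and t: "\<bar>t\<bar> * b \<le> 1"
  shows "(LINT \<omega>|M. exp (t * X k \<omega>)) \<le> exp (t\<^sup>2 * sig\<^sup>2)"
proof -
  have iX: "integrable M (X k)"
    apply (rule integrable_const_bound[where B=b]) using bnd[OF k] meas[OF k] by auto
  have i2: "integrable M (\<lambda>\<omega>. 1 + t * X k \<omega> + (t * X k \<omega>)\<^sup>2)"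
    using iX sq_integrable[OF k] by (simp add: power_mult_distrib)
  have i1: "integrable M (\<lambda>\<omega>. exp (t * X k \<omega>))"
    using exp_sum_integrable[of "{k}" t] k by simp
  have "(LINT \<omega>|M. exp (t * X k \<omega>)) \<le> (LINT \<omega>|M. 1 + t * X k \<omega> + (t * X k \<omega>)\<^sup>2)"
  proof (rule integral_mono_AE[OF i1 i2])
    show "AE \<omega> in M. exp (t * X k \<omega>) \<le> 1 + t * X k \<omega> + (t * X k \<omega>)\<^sup>2"
      using bnd[OF k]
    proof eventually_elim
      case (elim \<omega>)
      have "\<bar>t * X k \<omega>\<bar> \<le> \<bar>t\<bar> * b" unfolding abs_mult by (intro mult_left_mono elim) auto
      then show ?case using t by (intro exp_le_quad) auto
    qed
  qed
  also have "\<dots> = 1 + t * (LINT \<omega>|M. X k \<omega>) + t\<^sup>2 * (LINT \<omega>|M. (X k \<omega>)\<^sup>2)"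
    using iX sq_integrable[OF k] by (simp add: power_mult_distrib prob_space)
  also have "\<dots> = 1 + t\<^sup>2 * (LINT \<omega>|M. (X k \<omega>)\<^sup>2)" using mean0[OF k] by simp
  also have "\<dots> \<le> 1 + t\<^sup>2 * sig\<^sup>2" using var_le_sig[OF k] by (simp add: mult_left_mono)
  also have "\<dots> \<le> exp (t\<^sup>2 * sig\<^sup>2)" by (rule exp_ge_add_one_self)
  finally show ?thesis .
qed

lemma exp_sum_bound:
  assumes "finite K" "K \<subseteq> posidx" "\<bar>t\<bar> * b \<le> 1"
  shows "(LINT \<omega>|M. exp (t * (\<Sum>k\<in>K. X k \<omega>))) \<le> exp (t\<^sup>2 * sig\<^sup>2 * card K)"
proof -
  have "(LINT \<omega>|M. exp (t * (\<Sum>k\<in>K. X k \<omega>))) \<le> (\<Prod>k\<in>K. LINT \<omega>|M. exp (t * X k \<omega>))"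
    by (rule na_exp_prod[OF assms(1,2)])
  also have "\<dots> \<le> (\<Prod>k\<in>K. exp (t\<^sup>2 * sig\<^sup>2))"
    using assms by (intro prod_mono conjI exp_one) (auto intro!: integral_nonneg_AE)
  also have "\<dots> = exp (t\<^sup>2 * sig\<^sup>2 * card K)"
    by (simp add: exp_of_nat_mult[symmetric] mult.commute)
  finally show ?thesis .
qed

lemma tail_upper:
  assumes "finite K" "K \<subseteq> posidx" "sig\<^sup>2 * card K \<le> V" "0 < lam" "lam * b \<le> 2 * V" "s \<in> {-1, 1}"
  shows "prob {\<omega>\<in>space M. lam \<le> s * (\<Sum>k\<in>K. X k \<omega>)} \<le> exp (- lam\<^sup>2 / (4 * V))"
proof -
  have "0 < lam * b" using assms(4) bpos by simp
  then have V: "0 < V" using assms(5) by linarith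
  define t where "t = lam / (2 * V)"
  have t0: "0 < t" using V assms(4) by (simp add: t_def)
  have "\<bar>s * t\<bar> = t" using assms(6) t0 by auto
  moreover have "t * b \<le> 1" using assms(5) V by (simp add: t_def field_simps)
  ultimately have tb: "\<bar>s * t\<bar> * b \<le> 1" by simp
  have "{\<omega>\<in>space M. lam \<le> s * (\<Sum>k\<in>K. X k \<omega>)}
      = {\<omega>\<in>space M. exp (t * lam) \<le> exp ((s * t) * (\<Sum>k\<in>K. X k \<omega>))}"
  proof -
    have "lam \<le> s * y \<longleftrightarrow> t * lam \<le> (s * t) * y" for y
      using t0 by (simp add: mult.commute mult.left_commute)
    then show ?thesis by simp
  qed
  also have "prob \<dots> \<le> (LINT \<omega>|M. exp ((s * t) * (\<Sum>k\<in>K. X k \<omega>))) / exp (t * lam)"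
    by (rule integral_Markov_inequality_measure[where A="space M"])
       (auto intro!: exp_sum_integrable assms)
  also have "\<dots> \<le> exp ((s*t)\<^sup>2 * sig\<^sup>2 * card K) / exp (t * lam)"
    by (intro divide_right_mono exp_sum_bound assms tb) auto
  also have "\<dots> = exp (t\<^sup>2 * (sig\<^sup>2 * card K) - t * lam)"
    using assms(6) by (auto simp: exp_diff power_mult_distrib)
  also have "\<dots> \<le> exp (t\<^sup>2 * V - t * lam)"
    using assms(3) by (simp add: mult_left_mono)
  also have "t\<^sup>2 * V - t * lam = - lam\<^sup>2 / (4 * V)"
    using V by (simp add: t_def field_simps power2_eq_square)
  finally show ?thesis .
qed

lemma tail_abs:
  assumes "finite K" "K \<subseteq> posidx" "sig\<^sup>2 * card K \<le> V" "0 < lam" "lam * b \<le> 2 * V"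
  shows "prob {\<omega>\<in>space M. lam \<le> \<bar>\<Sum>k\<in>K. X k \<omega>\<bar>} \<le> 2 * exp (- lam\<^sup>2 / (4 * V))"
proof -
  have m[measurable]: "(\<lambda>\<omega>. \<Sum>k\<in>K. X k \<omega>) \<in> borel_measurable M" by (rule sum_meas[OF assms(2)])
  have "{\<omega>\<in>space M. lam \<le> \<bar>\<Sum>k\<in>K. X k \<omega>\<bar>} =
     {\<omega>\<in>space M. lam \<le> 1 * (\<Sum>k\<in>K. X k \<omega>)} \<union> {\<omega>\<in>space M. lam \<le> (-1) * (\<Sum>k\<in>K. X k \<omega>)}"
    by (auto simp: abs_if)
  also have "prob \<dots> \<le> prob {\<omega>\<in>space M. lam \<le> 1 * (\<Sum>k\<in>K. X k \<omega>)} + prob {\<omega>\<in>space M. lam \<le> (-1) * (\<Sum>k\<in>K. X k \<omega>)}"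
    by (rule measure_Un_le) measurable
  also have "\<dots> \<le> exp (- lam\<^sup>2 / (4 * V)) + exp (- lam\<^sup>2 / (4 * V))"
    by (intro add_mono tail_upper assms) auto
  finally show ?thesis by simp
qed

end

definition box :: "('d::finite \<Rightarrow> nat) \<Rightarrow> ('d \<Rightarrow> nat) set" where
  "box n = {k\<in>posidx. \<forall>i. k i \<le> n i}"

lemma box_Pi: "box n = PiE UNIV (\<lambda>i. {1..n i})"
  unfolding box_def posidx_def PiE_UNIV_domain by (auto simp: Pi_def)

lemma finite_box[simp]: "finite (box n)"
  unfolding box_Pi by (intro finite_PiE) auto

lemma card_box: "card (box n) = (\<Prod>i\<in>UNIV. n i)"
  unfolding box_Pi by (subst card_PiE) auto

lemma box_posidx: "box n \<subseteq> posidx" unfolding box_def by auto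

lemma box_mono: "(\<And>i. n i \<le> m i) \<Longrightarrow> box n \<subseteq> box m"
  unfolding box_def using order_trans by blast

lemma psum_box: "partial_sum X n \<omega> = (\<Sum>k\<in>box n. X k \<omega>)"
  unfolding partial_sum_def box_def by simp

lemma psum_diff:
  assumes "\<And>i. n i \<le> m i"
  shows "partial_sum X m \<omega> - partial_sum X n \<omega> = (\<Sum>k\<in>box m - box n. X k \<omega>)"
proof -
  have "box n \<subseteq> box m" using assms by (intro box_mono) auto
  then show ?thesis unfolding psum_box by (simp add: sum_diff)
qed

lemma card_box_diff:
  assumes "\<And>i. n i \<le> m i"
  shows "real (card (box m - box n)) = (\<Prod>i\<in>UNIV. real (m i)) - (\<Prod>i\<in>UNIV. real (n i))"
proof -
  have sub: "box n \<subseteq> box m" using assms by (intro box_mono) auto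
  have "card (box m - box n) = card (box m) - card (box n)"
    using sub by (simp add: card_Diff_subset finite_subset)
  moreover have "card (box n) \<le> card (box m)" using sub by (simp add: card_mono)
  ultimately show ?thesis by (simp add: card_box of_nat_diff)
qed

lemma pow_minus_one_le: "0 \<le> (x::real) \<Longrightarrow> (1 + x) ^ n - 1 \<le> n * x * (1 + x) ^ n"
proof (induction n)
  case 0 then show ?case by simp
next
  case (Suc n)
  have p: "1 \<le> (1 + x) ^ n" using Suc.prems by simp
  have "(1 + x) ^ Suc n - 1 = (1 + x) * ((1 + x) ^ n - 1) + x" by (simp add: algebra_simps)
  also have "\<dots> \<le> (1 + x) * (n * x * (1 + x) ^ n) + x"
    using Suc by (intro add_mono mult_left_mono) auto
  also have "x \<le> x * (1 + x) ^ Suc n" using Suc.prems p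
    by (metis mult_cancel_left1 mult_left_mono one_le_power le_add_same_cancel1 power_Suc)
  then have "(1 + x) * (n * x * (1 + x) ^ n) + x \<le> (1 + x) * (n * x * (1 + x) ^ n) + x * (1 + x) ^ Suc n"
    by simp
  also have "\<dots> = Suc n * x * (1 + x) ^ Suc n" by (simp add: algebra_simps)
  finally show ?case .
qed

lemma prod_le_scaled:
  fixes a c :: "'d::finite \<Rightarrow> real"
  assumes "\<And>i. 0 \<le> a i" "\<And>i. a i \<le> r * c i"
  shows "(\<Prod>i\<in>UNIV. a i) \<le> r ^ CARD('d) * (\<Prod>i\<in>UNIV. c i)"
proof -
  have "(\<Prod>i\<in>UNIV. a i) \<le> (\<Prod>i\<in>UNIV. r * c i)"
    using assms by (intro prod_mono) auto
  also have "\<dots> = r ^ CARD('d) * (\<Prod>i\<in>UNIV. c i)"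
    by (simp add: prod.distrib)
  finally show ?thesis .
qed

lemma card_mult_le:
  assumes s: "1 \<le> s" and A: "0 \<le> A"
  shows "real (card {g::nat. real g \<le> A \<and> s dvd g}) \<le> A / s + 1"
proof -
  have "{g::nat. real g \<le> A \<and> s dvd g} \<subseteq> (\<lambda>j. s * j) ` {..nat \<lfloor>A / s\<rfloor>}"
  proof
    fix g assume "g \<in> {g::nat. real g \<le> A \<and> s dvd g}"
    then have gA: "real g \<le> A" and "s dvd g" by auto
    then obtain j where g: "g = s * j" by (auto elim: dvdE)
    then have le: "real (s * j) \<le> A" using gA by simp
    have "real j \<le> A / s" using le s by (simp add: field_simps)
    then have "j \<le> nat \<lfloor>A / s\<rfloor>" by linarith
    then show "g \<in> (\<lambda>j. s * j) ` {..nat \<lfloor>A / s\<rfloor>}" using g by auto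
  qed
  then have "card {g::nat. real g \<le> A \<and> s dvd g} \<le> card ((\<lambda>j. s * j) ` {..nat \<lfloor>A / s\<rfloor>})"
    by (intro card_mono) auto
  also have "\<dots> \<le> card {..nat \<lfloor>A / s\<rfloor>}" by (rule card_image_le) auto
  also have "\<dots> = nat \<lfloor>A / s\<rfloor> + 1" by simp
  finally have "real (card {g::nat. real g \<le> A \<and> s dvd g}) \<le> real (nat \<lfloor>A / s\<rfloor>) + 1"
    by linarith
  also have "real (nat \<lfloor>A / s\<rfloor>) \<le> A / s"
  proof -
    have "0 \<le> A / s" using A s by simp
    then show ?thesis by linarith
  qed
  finally show ?thesis by simp
qed

lemma finite_mult_set: "finite {g::nat. real g \<le> A \<and> s dvd g}"
proof -
  have "{g::nat. real g \<le> A \<and> s dvd g} \<subseteq> {..nat \<lceil>A\<rceil>}" by (auto, linarith)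
  then show ?thesis using finite_subset by blast
qed

lemma card_grid:
  fixes A :: "'d::finite \<Rightarrow> real" and s :: "'d \<Rightarrow> nat"
  assumes "\<And>i. 1 \<le> s i" "\<And>i. 0 \<le> A i"
  shows "finite {g. \<forall>i. real (g i) \<le> A i \<and> s i dvd g i}"
    and "real (card {g. \<forall>i. real (g i) \<le> A i \<and> s i dvd g i}) \<le> (\<Prod>i\<in>UNIV. A i / s i + 1)"
proof -
  have eq: "{g. \<forall>i. real (g i) \<le> A i \<and> s i dvd g i} = PiE UNIV (\<lambda>i. {g::nat. real g \<le> A i \<and> s i dvd g})"
    unfolding PiE_UNIV_domain by (auto simp: Pi_def)
  show "finite {g. \<forall>i. real (g i) \<le> A i \<and> s i dvd g i}"
    unfolding eq by (intro finite_PiE finite_mult_set) auto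
  have "real (card {g. \<forall>i. real (g i) \<le> A i \<and> s i dvd g i}) = (\<Prod>i\<in>UNIV. real (card {g::nat. real g \<le> A i \<and> s i dvd g}))"
    unfolding eq by (subst card_PiE) auto
  also have "\<dots> \<le> (\<Prod>i\<in>UNIV. A i / s i + 1)"
    using assms by (intro prod_mono conjI card_mult_le) auto
  finally show "real (card {g. \<forall>i. real (g i) \<le> A i \<and> s i dvd g i}) \<le> (\<Prod>i\<in>UNIV. A i / s i + 1)" .
qed

lemma max_e_pos: "0 < max (x::real) (exp 1)"
  using exp_gt_zero[of 1] max.cobounded2[of "exp 1" x] by linarith

lemma Lg_ge1: "1 \<le> Lg x"
proof -
  have "ln (exp 1) \<le> ln (max x (exp 1))"
    using max_e_pos[of x] by (subst ln_le_cancel_iff) auto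
  then show ?thesis unfolding Lg_def by simp
qed

lemma Lg_pos: "0 < Lg x" using Lg_ge1[of x] by simp

lemma exp_Lg: "exp (Lg x) = max x (exp 1)"
  unfolding Lg_def using max_e_pos[of x] by simp

lemma Lg_mono: "x \<le> y \<Longrightarrow> Lg x \<le> Lg y"
  unfolding Lg_def using max_e_pos[of x] max_e_pos[of y] by (subst ln_le_cancel_iff) auto

lemma Lg_le_self: "1 \<le> x \<Longrightarrow> Lg x \<le> x"
proof -
  assume x: "1 \<le> x"
  show ?thesis
  proof (cases "x \<le> exp 1")
    case True then show ?thesis using x unfolding Lg_def by (simp add: max_def)
  next
    case False
    then have "Lg x = ln x" unfolding Lg_def by (simp add: max_def)
    also have "\<dots> \<le> x - 1" using x by (intro ln_le_minus_one) auto
    finally show ?thesis by simp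
  qed
qed

lemma Lg_sq_le: "exp 1 \<le> x \<Longrightarrow> (Lg x)\<^sup>2 \<le> 16 * sqrt x"
proof -
  assume x: "exp 1 \<le> x"
  then have x0: "0 < x" using exp_gt_zero[of 1] by linarith
  have "Lg x = ln x" using x unfolding Lg_def by (simp add: max_def)
  also have "ln x = 4 * ln (x powr (1/4))" using x0 by (simp add: ln_powr)
  also have "ln (x powr (1/4)) \<le> x powr (1/4) - 1" using x0 by (intro ln_le_minus_one) auto
  then have "4 * ln (x powr (1/4)) \<le> 4 * x powr (1/4)" by simp
  finally have le: "Lg x \<le> 4 * x powr (1/4)" .
  have "0 \<le> Lg x" using Lg_pos[of x] by simp
  then have "(Lg x)\<^sup>2 \<le> (4 * x powr (1/4))\<^sup>2" using le by (intro power_mono) auto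
  also have "\<dots> = 16 * (x powr (1/4))\<^sup>2" by (simp add: power_mult_distrib)
  also have "(x powr (1/4))\<^sup>2 = x powr (1/2)" using x0 by (simp add: powr_powr[symmetric] powr_realpow[symmetric] powr_powr)
  also have "x powr (1/2) = sqrt x" using x0 by (simp add: powr_half_sqrt)
  finally show ?thesis .
qed

definition Pn :: "('d::finite \<Rightarrow> nat) \<Rightarrow> real" where "Pn N = (\<Prod>i\<in>UNIV. real (N i))"
definition ell :: "('d::finite \<Rightarrow> nat) \<Rightarrow> real" where "ell N = Lg (Pn N)"
definition LL :: "('d::finite \<Rightarrow> nat) \<Rightarrow> real" where "LL N = Lg (ell N)"

lemma Pn_ge1: "(\<And>i. 1 \<le> N i) \<Longrightarrow> 1 \<le> Pn N"
  unfolding Pn_def by (intro prod_ge_1) auto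

lemma ell_ge1: "1 \<le> ell N" unfolding ell_def by (rule Lg_ge1)
lemma LL_ge1: "1 \<le> LL N" unfolding LL_def by (rule Lg_ge1)
lemma LL_le_ell: "LL N \<le> ell N" unfolding LL_def by (rule Lg_le_self[OF ell_ge1])
lemma Pn_le_exp_ell: "Pn N \<le> exp (ell N)" unfolding ell_def exp_Lg by simp
lemma ell_le_exp_LL: "ell N \<le> exp (LL N)" unfolding LL_def exp_Lg by simp

locale NAd = NAfield M X b for M :: "'a measure" and X :: "('d::finite \<Rightarrow> nat) \<Rightarrow> 'a \<Rightarrow> real" and b +
  fixes \<delta> :: real
  assumes dpos: "0 < \<delta>" and sigpos: "0 < sig"
begin

definition "D = 2 * \<delta>"
definition "dr = real CARD('d)"
definition "u = D * (1 + D) ^ CARD('d)"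
definition "cA = 3 * dr"
definition "rr = 2 * dr + 1"
definition lam :: "('d \<Rightarrow> nat) \<Rightarrow> real" where "lam N = sqrt (4 * cA * sig\<^sup>2 * dr * u * Pn N * LL N)"
definition eps :: "('d \<Rightarrow> nat) \<Rightarrow> real" where "eps N = min (1 / dr) (D * LL N / (3 * ell N))"
definition ss :: "('d \<Rightarrow> nat) \<Rightarrow> 'd \<Rightarrow> nat" where "ss N i = max 1 (nat \<lfloor>eps N * real (N i)\<rfloor>)"
definition KK :: "('d \<Rightarrow> nat) \<Rightarrow> ('d \<Rightarrow> nat) set" where "KK N = {k. \<forall>i. real (k i) \<le> D * real (N i)}"
definition GG :: "('d \<Rightarrow> nat) \<Rightarrow> ('d \<Rightarrow> nat) set" where "GG N = {g. \<forall>i. real (g i) \<le> D * real (N i) \<and> ss N i dvd g i}"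
definition rnd :: "('d \<Rightarrow> nat) \<Rightarrow> ('d \<Rightarrow> nat) \<Rightarrow> ('d \<Rightarrow> nat)" where "rnd N k = (\<lambda>i. ss N i * (k i div ss N i))"
definition EvA :: "('d \<Rightarrow> nat) \<Rightarrow> 'a set" where "EvA N = {\<omega>\<in>space M. \<exists>g\<in>GG N.
   lam N \<le> \<bar>partial_sum X (\<lambda>i. N i + g i) \<omega> - partial_sum X N \<omega>\<bar>}"
definition EvB :: "('d \<Rightarrow> nat) \<Rightarrow> 'a set" where "EvB N = {\<omega>\<in>space M. \<exists>k\<in>KK N.
   lam N \<le> \<bar>partial_sum X (\<lambda>i. N i + k i) \<omega> - partial_sum X (\<lambda>i. N i + rnd N k i) \<omega>\<bar>}"
definition "Qc = 16 * (cA + rr\<^sup>2) * b\<^sup>2 / (sig\<^sup>2 * dr * u)"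

lemma D_pos: "0 < D" unfolding D_def using dpos by simp
lemma dr_ge1: "1 \<le> dr" unfolding dr_def by simp
lemma u_pos: "0 < u" unfolding u_def using D_pos by simp
lemma cA_pos: "0 < cA" unfolding cA_def using dr_ge1 by simp
lemma rr_le_cA: "rr \<le> cA" unfolding rr_def cA_def using dr_ge1 by simp

lemma lam_sq:
  assumes "\<And>i. 1 \<le> N i"
  shows "0 < lam N" "(lam N)\<^sup>2 = 4 * cA * sig\<^sup>2 * dr * u * Pn N * LL N"
proof -
  have "1 \<le> Pn N" using assms by (rule Pn_ge1)
  then have pos: "0 < 4 * cA * sig\<^sup>2 * dr * u * Pn N * LL N"
    using cA_pos sigpos dr_ge1 u_pos LL_ge1[of N] by simp
  then show "0 < lam N" unfolding lam_def by simp
  show "(lam N)\<^sup>2 = 4 * cA * sig\<^sup>2 * dr * u * Pn N * LL N" unfolding lam_def using pos by simp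
qed

lemma eps_pos: "0 < eps N"
  unfolding eps_def using dr_ge1 D_pos LL_ge1[of N] ell_ge1[of N] by simp

lemma eps_le: "eps N \<le> 1 / dr" unfolding eps_def by simp
lemma eps_le2: "eps N \<le> D * LL N / (3 * ell N)" unfolding eps_def by simp

lemma ss_ge1: "1 \<le> ss N i" unfolding ss_def by simp

lemma ss_le: "real (ss N i) - 1 \<le> eps N * real (N i)"
proof -
  have e: "0 \<le> eps N * real (N i)" using eps_pos[of N] by simp
  show ?thesis
  proof (cases "nat \<lfloor>eps N * real (N i)\<rfloor> \<le> 1")
    case True then show ?thesis unfolding ss_def using e by (simp add: max_def)
  next
    case False
    then have "ss N i = nat \<lfloor>eps N * real (N i)\<rfloor>" unfolding ss_def by simp
    then show ?thesis using e by linarith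
  qed
qed

lemma ss_big: "2 \<le> eps N * real (N i) \<Longrightarrow> eps N * real (N i) / 2 \<le> real (ss N i)"
proof -
  assume a: "2 \<le> eps N * real (N i)"
  have "real (nat \<lfloor>eps N * real (N i)\<rfloor>) \<ge> eps N * real (N i) - 1" using a by linarith
  moreover have "real (ss N i) \<ge> real (nat \<lfloor>eps N * real (N i)\<rfloor>)" unfolding ss_def by simp
  ultimately show ?thesis using a by linarith
qed

lemma rnd_decomp: "k i = rnd N k i + k i mod ss N i"
  using div_mult_mod_eq[of "k i" "ss N i"] unfolding rnd_def by (simp add: mult.commute)

lemma rnd_le: "rnd N k i \<le> k i"
  using rnd_decomp[of k i N] by linarith

lemma rnd_diff: "real (k i) \<le> real (rnd N k i) + eps N * real (N i)"
proof -
  have e: "real (k i) = real (rnd N k i) + real (k i mod ss N i)"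
    using rnd_decomp[of k i N] by (metis of_nat_add)
  have "k i mod ss N i < ss N i" using ss_ge1[of N i] by simp
  then have "k i mod ss N i + 1 \<le> ss N i" by simp
  then have "real (k i mod ss N i + 1) \<le> real (ss N i)" by (simp only: of_nat_le_iff)
  then have "real (k i) \<le> real (rnd N k i) + (real (ss N i) - 1)" using e by simp
  then show ?thesis using ss_le[of N i] by linarith
qed

lemma rnd_in_GG: "k \<in> KK N \<Longrightarrow> rnd N k \<in> GG N"
proof -
  assume k: "k \<in> KK N"
  have "real (rnd N k i) \<le> D * real (N i)" for i
  proof -
    have "real (rnd N k i) \<le> real (k i)" using rnd_le[of N k i] by (simp only: of_nat_le_iff)
    also have "\<dots> \<le> D * real (N i)" using k unfolding KK_def by auto
    finally show ?thesis .
  qed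
  moreover have "ss N i dvd rnd N k i" for i unfolding rnd_def by simp
  ultimately show ?thesis unfolding GG_def by auto
qed

lemma KK_eq: "KK N = {g. \<forall>i. real (g i) \<le> D * real (N i) \<and> (\<lambda>_. 1::nat) i dvd g i}"
  unfolding KK_def by simp

lemma finite_KK: "finite (KK N)"
  unfolding KK_eq using D_pos
  by (intro card_grid(1)[where s="\<lambda>_. 1" and A="\<lambda>i. D * real (N i)"]) auto

lemma finite_GG: "finite (GG N)"
  unfolding GG_def using D_pos ss_ge1 by (intro card_grid(1)) auto

lemma card_KK:
  assumes "\<And>i. 1 \<le> N i"
  shows "real (card (KK N)) \<le> (1 + D) ^ CARD('d) * Pn N"
proof -
  have N1: "1 \<le> real (N i)" for i using assms[of i] by simp
  have "real (card (KK N)) \<le> (\<Prod>i\<in>UNIV. D * real (N i) / real ((\<lambda>_. 1::nat) i) + 1)"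
    unfolding KK_eq using D_pos
    by (intro card_grid(2)[where s="\<lambda>_. 1" and A="\<lambda>i. D * real (N i)"]) auto
  also have "\<dots> \<le> (1 + D) ^ CARD('d) * (\<Prod>i\<in>UNIV. real (N i))"
  proof (rule prod_le_scaled)
    fix i
    show "0 \<le> D * real (N i) / real ((\<lambda>_. 1::nat) i) + 1" using D_pos by simp
    show "D * real (N i) / real ((\<lambda>_. 1::nat) i) + 1 \<le> (1 + D) * real (N i)"
      using N1[of i] by (simp add: algebra_simps)
  qed
  finally show ?thesis unfolding Pn_def .
qed

lemma card_GG:
  assumes "\<And>i. 1 \<le> N i"
  shows "real (card (GG N)) \<le> ((2 * D * dr + 7) * ell N) ^ CARD('d)"
proof -
  have c1: "D * real (N i) / real (ss N i) + 1 \<le> 2 * D / eps N + 1" for i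
  proof (cases "2 \<le> eps N * real (N i)")
    case True
    have "D * real (N i) / real (ss N i) \<le> D * real (N i) / (eps N * real (N i) / 2)"
      using ss_big[OF True] True D_pos by (intro divide_left_mono) auto
    also have "\<dots> = 2 * D / eps N" using assms[of i] eps_pos[of N] by (simp add: field_simps)
    finally show ?thesis by simp
  next
    case False
    have "D * real (N i) / real (ss N i) \<le> D * real (N i) / 1"
      using ss_ge1[of N i] D_pos by (intro divide_left_mono) auto
    also have "\<dots> \<le> 2 * D / eps N"
      using False eps_pos[of N] D_pos by (simp add: field_simps)
    finally show ?thesis by simp
  qed
  have c2: "2 * D / eps N + 1 \<le> (2 * D * dr + 7) * ell N"
  proof -
    have "1 / eps N \<le> dr + 3 * ell N / D"
    proof (cases "1 / dr \<le> D * LL N / (3 * ell N)")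
      case True
      then have "eps N = 1 / dr" unfolding eps_def by simp
      then show ?thesis using dr_ge1 D_pos ell_ge1[of N] by simp
    next
      case False
      then have "eps N = D * LL N / (3 * ell N)" unfolding eps_def by simp
      then have "1 / eps N = 3 * ell N / (D * LL N)" by simp
      also have "\<dots> \<le> 3 * ell N / D"
        using LL_ge1[of N] D_pos ell_ge1[of N] by (simp add: field_simps mult_left_mono)
      finally show ?thesis using dr_ge1 by simp
    qed
    then have "2 * D * (1 / eps N) \<le> 2 * D * (dr + 3 * ell N / D)"
      using D_pos by (intro mult_left_mono) auto
    moreover have "2 * D * (dr + 3 * ell N / D) = 2 * D * dr + 6 * ell N"
      using D_pos by (simp add: field_simps)
    ultimately have "2 * D / eps N \<le> 2 * D * dr + 6 * ell N" by simp
    also have "\<dots> \<le> 2 * D * dr * ell N + 6 * ell N"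
      using D_pos dr_ge1 ell_ge1[of N] by simp
    finally show ?thesis using ell_ge1[of N] by (simp add: algebra_simps)
  qed
  have "real (card (GG N)) \<le> (\<Prod>i\<in>UNIV. D * real (N i) / real (ss N i) + 1)"
    unfolding GG_def using D_pos ss_ge1 by (intro card_grid(2)) auto
  also have "\<dots> \<le> (\<Prod>i\<in>(UNIV::'d set). (2 * D * dr + 7) * ell N)"
  proof (intro prod_mono conjI)
    fix i
    show "0 \<le> D * real (N i) / real (ss N i) + 1" using D_pos by simp
    show "D * real (N i) / real (ss N i) + 1 \<le> (2 * D * dr + 7) * ell N"
      using c1[of i] c2 by linarith
  qed
  also have "\<dots> = ((2 * D * dr + 7) * ell N) ^ CARD('d)" by simp
  finally show ?thesis .
qed

end

context NAd begin

lemma N1r: "(\<And>i. 1 \<le> N i) \<Longrightarrow> 1 \<le> real (N i)" by (simp add: Suc_le_eq)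

lemma regA:
  assumes N: "\<And>i. 1 \<le> N i" and g: "g \<in> KK N"
  shows "real (card (box (\<lambda>i. N i + g i) - box N)) \<le> dr * u * Pn N"
proof -
  have "(\<Prod>i\<in>UNIV. real (N i + g i)) \<le> (1 + D) ^ CARD('d) * (\<Prod>i\<in>UNIV. real (N i))"
  proof (rule prod_le_scaled)
    fix i
    show "0 \<le> real (N i + g i)" by simp
    show "real (N i + g i) \<le> (1 + D) * real (N i)" using g unfolding KK_def by (auto simp: algebra_simps)
  qed
  then have "real (card (box (\<lambda>i. N i + g i) - box N)) \<le> ((1 + D) ^ CARD('d) - 1) * Pn N"
    by (subst card_box_diff) (auto simp: Pn_def algebra_simps)
  also have "\<dots> \<le> (CARD('d) * D * (1 + D) ^ CARD('d)) * Pn N"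
    using Pn_ge1[of N, OF N] D_pos by (intro mult_right_mono pow_minus_one_le) auto
  also have "\<dots> = dr * u * Pn N" by (simp add: dr_def u_def)
  finally show ?thesis .
qed

lemma regB:
  assumes N: "\<And>i. 1 \<le> N i" and k: "k \<in> KK N"
  shows "real (card (box (\<lambda>i. N i + k i) - box (\<lambda>i. N i + rnd N k i))) \<le> dr * u * Pn N * LL N / ell N"
proof -
  define e where "e = eps N"
  have e0: "0 < e" unfolding e_def by (rule eps_pos)
  have pr: "(\<Prod>i\<in>UNIV. real (N i + rnd N k i)) \<le> (1 + D) ^ CARD('d) * Pn N"
    unfolding Pn_def
  proof (rule prod_le_scaled)
    fix i
    show "0 \<le> real (N i + rnd N k i)" by simp
    have "real (rnd N k i) \<le> real (k i)" using rnd_le[of N k i] by (simp only: of_nat_le_iff)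
    also have "\<dots> \<le> D * real (N i)" using k unfolding KK_def by auto
    finally show "real (N i + rnd N k i) \<le> (1 + D) * real (N i)" by (simp add: algebra_simps)
  qed
  have pk: "(\<Prod>i\<in>UNIV. real (N i + k i)) \<le> (1 + e) ^ CARD('d) * (\<Prod>i\<in>UNIV. real (N i + rnd N k i))"
  proof (rule prod_le_scaled)
    fix i
    show "0 \<le> real (N i + k i)" by simp
    have "real (k i) \<le> real (rnd N k i) + e * real (N i)" unfolding e_def by (rule rnd_diff)
    also have "\<dots> \<le> real (rnd N k i) + e * real (N i + rnd N k i)"
      using e0 by (intro add_left_mono mult_left_mono) auto
    finally show "real (N i + k i) \<le> (1 + e) * real (N i + rnd N k i)" by (simp add: algebra_simps)
  qed
  have sub: "\<And>i. N i + rnd N k i \<le> N i + k i" using rnd_le by simp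
  have "real (card (box (\<lambda>i. N i + k i) - box (\<lambda>i. N i + rnd N k i)))
        = (\<Prod>i\<in>UNIV. real (N i + k i)) - (\<Prod>i\<in>UNIV. real (N i + rnd N k i))"
    by (rule card_box_diff) (use sub in auto)
  also have "\<dots> \<le> ((1 + e) ^ CARD('d) - 1) * (\<Prod>i\<in>UNIV. real (N i + rnd N k i))"
    using pk by (simp add: algebra_simps)
  also have "\<dots> \<le> (CARD('d) * e * (1 + e) ^ CARD('d)) * (\<Prod>i\<in>UNIV. real (N i + rnd N k i))"
    using e0 by (intro mult_right_mono pow_minus_one_le) (auto intro: prod_nonneg)
  also have "(1 + e) ^ CARD('d) \<le> 3"
  proof -
    have "(1 + e) ^ CARD('d) \<le> exp e ^ CARD('d)"
      using e0 by (intro power_mono) auto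
    also have "\<dots> = exp (CARD('d) * e)" by (simp add: exp_of_nat_mult)
    also have "\<dots> \<le> exp 1"
    proof -
      have "e \<le> 1 / dr" unfolding e_def by (rule eps_le)
      then have "dr * e \<le> 1" using dr_ge1 by (simp add: field_simps)
      then show ?thesis by (simp add: dr_def)
    qed
    also have "\<dots> \<le> 3" by (rule exp_le)
    finally show ?thesis .
  qed
  then have "(CARD('d) * e * (1 + e) ^ CARD('d)) * (\<Prod>i\<in>UNIV. real (N i + rnd N k i))
      \<le> (CARD('d) * e * 3) * ((1 + D) ^ CARD('d) * Pn N)"
    using e0 pr by (intro mult_mono) (auto intro: prod_nonneg)
  also have "\<dots> = dr * (3 * e) * ((1 + D) ^ CARD('d) * Pn N)" by (simp add: dr_def)
  also have "\<dots> \<le> dr * (D * LL N / ell N) * ((1 + D) ^ CARD('d) * Pn N)"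
  proof -
    have "e \<le> D * LL N / (3 * ell N)" unfolding e_def by (rule eps_le2)
    then have "3 * e \<le> D * LL N / ell N" by simp
    then show ?thesis using dr_ge1 Pn_ge1[of N, OF N] D_pos by (intro mult_right_mono mult_left_mono) auto
  qed
  also have "\<dots> = dr * u * Pn N * LL N / ell N" by (simp add: u_def)
  finally show ?thesis .
qed

lemma conds:
  assumes N: "\<And>i. 1 \<le> N i" and Pe: "exp 1 \<le> Pn N" and PQ: "Qc \<le> sqrt (Pn N)"
  shows "lam N * b \<le> 2 * (sig\<^sup>2 * dr * u * Pn N)" and "2 * rr * ell N * b \<le> lam N"
proof -
  define P where "P = Pn N"
  define p where "p = sqrt P"
  define K where "K = sig\<^sup>2 * dr * u"
  have P1: "1 \<le> P" unfolding P_def using N by (rule Pn_ge1)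
  have p0: "0 \<le> p" unfolding p_def using P1 by simp
  have pp: "p * p = P" unfolding p_def using P1 by simp
  have K0: "0 < K" unfolding K_def using sigpos dr_ge1 u_pos by simp
  have lam2: "lam N * lam N = 4 * cA * K * P * LL N"
  proof -
    have "lam N * lam N = (lam N)\<^sup>2" by (simp add: power2_eq_square)
    also have "\<dots> = 4 * cA * sig\<^sup>2 * dr * u * Pn N * LL N" by (rule lam_sq(2)[of N, OF N])
    finally show ?thesis unfolding K_def P_def by simp
  qed
  have lam0: "0 < lam N" using lam_sq(1)[of N, OF N] .
  have hl: "ell N * ell N \<le> 16 * p"
    using Lg_sq_le[OF Pe] unfolding ell_def p_def P_def by (simp add: power2_eq_square)
  have l1: "1 \<le> ell N" by (rule ell_ge1)
  have L1: "1 \<le> LL N" by (rule LL_ge1)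
  have Lp: "LL N \<le> 16 * p"
  proof -
    have "LL N \<le> ell N" by (rule LL_le_ell)
    also have "\<dots> \<le> ell N * ell N" using l1 by (simp add: mult_le_cancel_left1)
    finally show ?thesis using hl by linarith
  qed
  have hq: "16 * (cA + rr\<^sup>2) * b\<^sup>2 \<le> K * p"
  proof -
    have "Qc * K \<le> p * K" using PQ K0 unfolding p_def P_def by (intro mult_right_mono) auto
    moreover have "Qc = 16 * (cA + rr\<^sup>2) * b\<^sup>2 / K" unfolding Qc_def K_def by simp
    then have "Qc * K = 16 * (cA + rr\<^sup>2) * b\<^sup>2" using K0 by simp
    ultimately show ?thesis by (simp add: mult.commute)
  qed
  have b2: "0 \<le> b\<^sup>2" by simp
  have rr2: "0 \<le> rr\<^sup>2" by simp
  have cA0: "0 < cA" by (rule cA_pos)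
  show "lam N * b \<le> 2 * (sig\<^sup>2 * dr * u * Pn N)"
  proof -
    have "cA * LL N * b\<^sup>2 \<le> cA * (16 * p) * b\<^sup>2"
      using Lp cA0 by (intro mult_right_mono mult_left_mono) auto
    also have "\<dots> = (16 * cA * b\<^sup>2) * p" by simp
    also have "\<dots> \<le> (16 * (cA + rr\<^sup>2) * b\<^sup>2) * p"
      using p0 rr2 b2 by (intro mult_right_mono) (auto intro: mult_right_mono)
    also have "\<dots> \<le> (K * p) * p" using hq p0 by (intro mult_right_mono) auto
    also have "\<dots> = K * P" using pp by (simp add: mult.assoc)
    finally have a: "cA * LL N * b\<^sup>2 \<le> K * P" .
    have "(lam N * b) * (lam N * b) = (lam N * lam N) * b\<^sup>2"
      by (simp add: power2_eq_square)
    also have "\<dots> = (4 * cA * K * P * LL N) * b\<^sup>2" by (simp only: lam2)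
    also have "\<dots> = 4 * K * P * (cA * LL N * b\<^sup>2)" by simp
    also have "\<dots> \<le> 4 * K * P * (K * P)" using a K0 P1 by (intro mult_left_mono) auto
    also have "\<dots> = (2 * (K * P)) * (2 * (K * P))" by simp
    finally have "(lam N * b)\<^sup>2 \<le> (2 * (K * P))\<^sup>2" by (simp add: power2_eq_square)
    moreover have "0 \<le> 2 * (K * P)" using K0 P1 by simp
    ultimately have "lam N * b \<le> 2 * (K * P)" by (rule power2_le_imp_le)
    then show ?thesis unfolding K_def P_def by (simp add: mult.assoc)
  qed
  show "2 * rr * ell N * b \<le> lam N"
  proof -
    have "(2 * rr * ell N * b) * (2 * rr * ell N * b) = 4 * rr\<^sup>2 * b\<^sup>2 * (ell N * ell N)"
      by (simp add: power2_eq_square algebra_simps)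
    also have "\<dots> \<le> 4 * rr\<^sup>2 * b\<^sup>2 * (16 * p)" using hl by (intro mult_left_mono) auto
    also have "\<dots> = 4 * (16 * rr\<^sup>2 * b\<^sup>2) * p" by simp
    also have "\<dots> \<le> 4 * (16 * (cA + rr\<^sup>2) * b\<^sup>2) * p"
      using p0 cA0 b2 by (intro mult_right_mono mult_left_mono) auto
    also have "\<dots> \<le> 4 * (K * p) * p" using hq p0 by (intro mult_right_mono mult_left_mono) auto
    also have "\<dots> = 4 * K * (p * p)" by simp
    also have "\<dots> = 4 * K * P" by (simp only: pp)
    also have "\<dots> \<le> 4 * K * P * (cA * LL N)"
    proof -
      have "1 * 1 \<le> cA * LL N" using L1 cA_def dr_ge1 by (intro mult_mono) auto
      moreover have "0 \<le> 4 * K * P" using K0 P1 by simp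
      ultimately show ?thesis using mult_left_mono[of 1 "cA * LL N" "4 * K * P"] by simp
    qed
    also have "\<dots> = 4 * cA * K * P * LL N" by simp
    also have "\<dots> = lam N * lam N" by (simp only: lam2)
    finally have "(2 * rr * ell N * b)\<^sup>2 \<le> (lam N)\<^sup>2" by (simp add: power2_eq_square)
    moreover have "0 \<le> lam N" using lam0 by simp
    ultimately show ?thesis by (rule power2_le_imp_le)
  qed
qed

end

context NAd begin

lemma abs_set_meas:
  fixes f :: "'a \<Rightarrow> real"
  assumes [measurable]: "f \<in> borel_measurable M"
  shows "{\<omega>\<in>space M. c \<le> \<bar>f \<omega>\<bar>} \<in> sets M"
proof -
  have "(\<lambda>\<omega>. \<bar>f \<omega>\<bar>) \<in> borel_measurable M" using assms by (rule borel_measurable_abs)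
  then show ?thesis by (intro borel_measurable_le) auto
qed

lemma exp_mult_ge_pow:
  assumes "1 \<le> x" and that: "x \<le> exp y" shows "x ^ n \<le> exp (real n * y)"
proof -
  have "x ^ n \<le> exp y ^ n" using that assms by (intro power_mono) auto
  also have "\<dots> = exp (real n * y)" by (simp add: exp_of_nat_mult)
  finally show ?thesis .
qed

lemma probA:
  assumes N: "\<And>i. 1 \<le> N i" and Pe: "exp 1 \<le> Pn N" and PQ: "Qc \<le> sqrt (Pn N)"
  shows "prob (EvA N) \<le> 2 * (2 * D * dr + 7) ^ CARD('d) / ell N ^ (2 * CARD('d))"
proof -
  define R where "R g = box (\<lambda>i. N i + g i) - box N" for g
  define V where "V = sig\<^sup>2 * dr * u * Pn N"
  define F where "F g = {\<omega>\<in>space M. lam N \<le> \<bar>\<Sum>k\<in>R g. X k \<omega>\<bar>}" for g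
  have P1: "1 \<le> Pn N" using N by (rule Pn_ge1)
  have V0: "0 < V" unfolding V_def using sigpos dr_ge1 u_pos P1 by simp
  have lam0: "0 < lam N" by (rule lam_sq(1)[of N, OF N])
  have RP: "R g \<subseteq> posidx" for g unfolding R_def using box_posidx by blast
  have Fm: "F g \<in> sets M" for g unfolding F_def by (intro abs_set_meas sum_meas RP)
  have EvA_eq: "EvA N = (\<Union>g\<in>GG N. F g)"
  proof -
    have "partial_sum X (\<lambda>i. N i + g i) \<omega> - partial_sum X N \<omega> = (\<Sum>k\<in>R g. X k \<omega>)" for g \<omega>
      unfolding R_def by (rule psum_diff) simp
    then show ?thesis unfolding EvA_def F_def by auto
  qed
  have GK: "GG N \<subseteq> KK N" unfolding GG_def KK_def by auto
  have Fb: "prob (F g) \<le> 2 * exp (- cA * LL N)" if g: "g \<in> GG N" for g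
  proof -
    have "prob (F g) \<le> 2 * exp (- (lam N)\<^sup>2 / (4 * V))"
      unfolding F_def
    proof (rule tail_abs)
      show "finite (R g)" unfolding R_def by simp
      show "R g \<subseteq> posidx" by (rule RP)
      have "real (card (R g)) \<le> dr * u * Pn N" unfolding R_def using g GK by (intro regA N) auto
      then show "sig\<^sup>2 * real (card (R g)) \<le> V" unfolding V_def
        using mult_left_mono[of "real (card (R g))" "dr * u * Pn N" "sig\<^sup>2"] by (simp add: mult.assoc)
      show "0 < lam N" by (rule lam0)
      show "lam N * b \<le> 2 * V" unfolding V_def by (rule conds(1)[of N, OF N Pe PQ])
    qed
    also have "- (lam N)\<^sup>2 / (4 * V) = - (cA * LL N)"
    proof -
      have "(lam N)\<^sup>2 = (4 * V) * (cA * LL N)"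
        using lam_sq(2)[of N, OF N] unfolding V_def by (simp add: mult_ac)
      then show ?thesis using V0 by simp
    qed
    finally show ?thesis by simp
  qed
  have "prob (EvA N) \<le> (\<Sum>g\<in>GG N. prob (F g))"
    unfolding EvA_eq by (rule finite_measure_subadditive_finite) (use finite_GG Fm in auto)
  also have "\<dots> \<le> (\<Sum>g\<in>GG N. 2 * exp (- cA * LL N))" by (intro sum_mono Fb)
  also have "\<dots> = real (card (GG N)) * (2 * exp (- cA * LL N))" by simp
  also have "\<dots> \<le> ((2 * D * dr + 7) * ell N) ^ CARD('d) * (2 * exp (- cA * LL N))"
    by (intro mult_right_mono card_GG N) auto
  also have "exp (- cA * LL N) \<le> 1 / ell N ^ (3 * CARD('d))"
  proof -
    have "ell N ^ (3 * CARD('d)) \<le> exp (real (3 * CARD('d)) * LL N)"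
      by (intro exp_mult_ge_pow ell_ge1 ell_le_exp_LL)
    also have "real (3 * CARD('d)) * LL N = cA * LL N" by (simp add: cA_def dr_def)
    finally have "ell N ^ (3 * CARD('d)) \<le> exp (cA * LL N)" .
    moreover have "0 < ell N ^ (3 * CARD('d))" using ell_ge1[of N] by simp
    ultimately show ?thesis by (simp add: exp_minus field_simps)
  qed
  then have "((2 * D * dr + 7) * ell N) ^ CARD('d) * (2 * exp (- cA * LL N))
      \<le> ((2 * D * dr + 7) * ell N) ^ CARD('d) * (2 * (1 / ell N ^ (3 * CARD('d))))"
    using D_pos dr_ge1 ell_ge1[of N] by (intro mult_left_mono) auto
  also have "\<dots> = 2 * (2 * D * dr + 7) ^ CARD('d) / ell N ^ (2 * CARD('d))"
  proof -
    have e: "ell N ^ (3 * CARD('d)) = ell N ^ CARD('d) * ell N ^ (2 * CARD('d))"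
      by (simp add: power_add[symmetric])
    have ne: "ell N ^ CARD('d) \<noteq> 0" using ell_ge1[of N] by simp
    have "((2 * D * dr + 7) * ell N) ^ CARD('d) * (2 * (1 / ell N ^ (3 * CARD('d))))
        = 2 * (2 * D * dr + 7) ^ CARD('d) * (ell N ^ CARD('d) / (ell N ^ CARD('d) * ell N ^ (2 * CARD('d))))"
      unfolding e power_mult_distrib by simp
    also have "ell N ^ CARD('d) / (ell N ^ CARD('d) * ell N ^ (2 * CARD('d))) = 1 / ell N ^ (2 * CARD('d))"
      using ne by simp
    finally show ?thesis by simp
  qed
  finally show ?thesis .
qed

lemma probB:
  assumes N: "\<And>i. 1 \<le> N i" and Pe: "exp 1 \<le> Pn N" and PQ: "Qc \<le> sqrt (Pn N)"
  shows "prob (EvB N) \<le> 2 * (1 + D) ^ CARD('d) / ell N ^ (2 * CARD('d))"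
proof -
  define R where "R k = box (\<lambda>i. N i + k i) - box (\<lambda>i. N i + rnd N k i)" for k
  define V where "V = (lam N)\<^sup>2 / (4 * rr * ell N)"
  define F where "F k = {\<omega>\<in>space M. lam N \<le> \<bar>\<Sum>j\<in>R k. X j \<omega>\<bar>}" for k
  have P1: "1 \<le> Pn N" using N by (rule Pn_ge1)
  have l1: "1 \<le> ell N" by (rule ell_ge1)
  have rr1: "1 \<le> rr" unfolding rr_def using dr_ge1 by simp
  have lam0: "0 < lam N" by (rule lam_sq(1)[of N, OF N])
  have V0: "0 < V" unfolding V_def using lam0 rr1 l1 by simp
  have RP: "R k \<subseteq> posidx" for k unfolding R_def using box_posidx by blast
  have Fm: "F k \<in> sets M" for k unfolding F_def by (intro abs_set_meas sum_meas RP)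
  have EvB_eq: "EvB N = (\<Union>k\<in>KK N. F k)"
  proof -
    have "partial_sum X (\<lambda>i. N i + k i) \<omega> - partial_sum X (\<lambda>i. N i + rnd N k i) \<omega> = (\<Sum>j\<in>R k. X j \<omega>)" for k \<omega>
      unfolding R_def by (rule psum_diff) (simp add: rnd_le)
    then show ?thesis unfolding EvB_def F_def by auto
  qed
  have Fb: "prob (F k) \<le> 2 * exp (- rr * ell N)" if k: "k \<in> KK N" for k
  proof -
    have "prob (F k) \<le> 2 * exp (- (lam N)\<^sup>2 / (4 * V))"
      unfolding F_def
    proof (rule tail_abs)
      show "finite (R k)" unfolding R_def by simp
      show "R k \<subseteq> posidx" by (rule RP)
      have c: "real (card (R k)) \<le> dr * u * Pn N * LL N / ell N" unfolding R_def using k by (intro regB N) auto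
      have "sig\<^sup>2 * real (card (R k)) \<le> sig\<^sup>2 * (dr * u * Pn N * LL N / ell N)"
        using c by (intro mult_left_mono) auto
      also have "\<dots> \<le> (cA / rr) * (sig\<^sup>2 * (dr * u * Pn N * LL N / ell N))"
      proof -
        define Y where "Y = sig\<^sup>2 * (dr * u * Pn N * LL N / ell N)"
        have h: "1 \<le> cA / rr" using rr_le_cA rr1 by simp
        have Y0: "0 \<le> Y" unfolding Y_def
          using dr_ge1 u_pos P1 LL_ge1[of N] l1 by simp
        have "1 * Y \<le> (cA / rr) * Y" by (rule mult_right_mono[OF h Y0])
        then show ?thesis unfolding Y_def[symmetric] by (simp only: mult_1_left)
      qed
      also have "\<dots> = V"
      proof -
        have rr0: "rr \<noteq> 0" and l0: "ell N \<noteq> 0" using rr1 l1 by auto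
        have "(lam N)\<^sup>2 = 4 * cA * sig\<^sup>2 * dr * u * Pn N * LL N" by (rule lam_sq(2)[of N, OF N])
        then show ?thesis unfolding V_def using rr0 l0 by (simp add: field_simps)
      qed
      finally show "sig\<^sup>2 * real (card (R k)) \<le> V" .
      show "0 < lam N" by (rule lam0)
      have c2: "2 * rr * ell N * b \<le> lam N" by (rule conds(2)[of N, OF N Pe PQ])
      have "lam N * b = lam N * (2 * rr * ell N * b) / (2 * rr * ell N)" using rr1 l1 by simp
      also have "\<dots> \<le> lam N * lam N / (2 * rr * ell N)"
        using c2 lam0 rr1 l1 by (intro divide_right_mono mult_left_mono) auto
      also have "\<dots> = 2 * V" unfolding V_def by (simp add: power2_eq_square field_simps)
      finally show "lam N * b \<le> 2 * V" .
    qed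
    also have "- (lam N)\<^sup>2 / (4 * V) = - (rr * ell N)"
      unfolding V_def using lam0 rr1 l1 by (simp add: field_simps)
    finally show ?thesis by simp
  qed
  have "prob (EvB N) \<le> (\<Sum>k\<in>KK N. prob (F k))"
    unfolding EvB_eq by (rule finite_measure_subadditive_finite) (use finite_KK Fm in auto)
  also have "\<dots> \<le> (\<Sum>k\<in>KK N. 2 * exp (- rr * ell N))" by (intro sum_mono Fb)
  also have "\<dots> = real (card (KK N)) * (2 * exp (- rr * ell N))" by simp
  also have "\<dots> \<le> ((1 + D) ^ CARD('d) * exp (ell N)) * (2 * exp (- rr * ell N))"
  proof (intro mult_right_mono)
    show "real (card (KK N)) \<le> (1 + D) ^ CARD('d) * exp (ell N)"
      using card_KK[of N, OF N] Pn_le_exp_ell[of N] D_pos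
      by (meson order_trans mult_left_mono zero_le_power less_imp_le add_nonneg_nonneg zero_le_one)
  qed auto
  also have "\<dots> = 2 * (1 + D) ^ CARD('d) * exp (- (2 * dr) * ell N)"
    by (simp add: rr_def algebra_simps exp_add[symmetric] exp_minus)
  also have "exp (- (2 * dr) * ell N) \<le> 1 / ell N ^ (2 * CARD('d))"
  proof -
    have "ell N ^ (2 * CARD('d)) \<le> exp (real (2 * CARD('d)) * ell N)"
      by (intro exp_mult_ge_pow ell_ge1) (use exp_ge_add_one_self[of "ell N"] in linarith)
    also have "real (2 * CARD('d)) * ell N = 2 * dr * ell N" by (simp add: dr_def)
    finally have "ell N ^ (2 * CARD('d)) \<le> exp (2 * dr * ell N)" .
    moreover have "0 < ell N ^ (2 * CARD('d))" using l1 by simp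
    ultimately show ?thesis by (simp add: exp_minus field_simps)
  qed
  then have "2 * (1 + D) ^ CARD('d) * exp (- (2 * dr) * ell N) \<le> 2 * (1 + D) ^ CARD('d) * (1 / ell N ^ (2 * CARD('d)))"
    using D_pos by (intro mult_left_mono) auto
  finally show ?thesis by simp
qed

end

lemma infinite_fun_nat: "infinite (UNIV :: ('d::finite \<Rightarrow> nat) set)"
proof
  assume fin: "finite (UNIV :: ('d \<Rightarrow> nat) set)"
  have inj: "inj (\<lambda>n::nat. (\<lambda>_::'d. n))" by (auto simp: inj_on_def fun_eq_iff)
  have "finite (range (\<lambda>n::nat. (\<lambda>_::'d. n)))" using fin by (rule finite_subset[rotated]) simp
  then have "finite (UNIV :: nat set)" using inj by (rule finite_imageD)
  then show False by simp
qed

lemma (in prob_space) BC_countable: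
  fixes E :: "('d::finite \<Rightarrow> nat) \<Rightarrow> 'a set"
  assumes Em: "\<And>j. E j \<in> sets M" and Eb: "\<And>F. finite F \<Longrightarrow> (\<Sum>j\<in>F. prob (E j)) \<le> B"
  shows "AE \<omega> in M. finite {j. \<omega> \<in> E j}"
proof -
  define e where "e = from_nat_into (UNIV :: ('d \<Rightarrow> nat) set)"
  have bij: "bij_betw e UNIV UNIV" unfolding e_def
    by (rule bij_betw_from_nat_into) (auto simp: infinite_fun_nat)
  then have inj: "inj e" and surj: "surj e" by (auto simp: bij_betw_def)
  have summ: "summable (\<lambda>m. prob (E (e m)))"
  proof (rule summableI_nonneg_bounded)
    fix n
    have "(\<Sum>m<n. prob (E (e m))) = (\<Sum>j\<in>e ` {..<n}. prob (E j))"
      using inj by (subst sum.reindex) (auto intro: inj_on_subset)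
    also have "\<dots> \<le> B" by (rule Eb) simp
    finally show "(\<Sum>m<n. prob (E (e m))) \<le> B" .
  qed auto
  have "AE \<omega> in M. eventually (\<lambda>m. \<omega> \<in> space M - E (e m)) sequentially"
    by (rule borel_cantelli_AE1) (auto simp: Em summ less_top[symmetric])
  then show ?thesis
  proof eventually_elim
    case (elim \<omega>)
    then obtain M0 where M0: "\<And>m. m \<ge> M0 \<Longrightarrow> \<omega> \<notin> E (e m)" by (auto simp: eventually_sequentially)
    have "{j. \<omega> \<in> E j} \<subseteq> e ` {..<M0}"
    proof
      fix j assume j: "j \<in> {j. \<omega> \<in> E j}"
      obtain m where m: "j = e m" using surj by (rule surjE)
      have "\<omega> \<in> E (e m)" using j m by simp
      then have "\<not> m \<ge> M0" using M0 by blast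
      then have "m < M0" by simp
      then show "j \<in> e ` {..<M0}" using m by auto
    qed
    then show ?case by (rule finite_subset) auto
  qed
qed

lemma sum_prod_bound:
  fixes h :: "nat \<Rightarrow> real" and F :: "('d::finite \<Rightarrow> nat) set"
  assumes h0: "\<And>t. 0 \<le> h t" and hs: "summable h" and F: "finite F"
  shows "(\<Sum>j\<in>F. \<Prod>i\<in>UNIV. h (j i)) \<le> (suminf h) ^ CARD('d)"
proof -
  define S where "S = (\<Union>j\<in>F. range j)"
  have "finite S" unfolding S_def using F by auto
  then have "\<exists>m. \<forall>x\<in>S. x \<le> m" by (rule finite_nat_set_iff_bounded_le[THEN iffD1])
  then obtain m where m: "\<And>x. x \<in> S \<Longrightarrow> x \<le> m" by blast
  have sub: "F \<subseteq> PiE UNIV (\<lambda>_. {..m})"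
    using m unfolding S_def PiE_UNIV_domain by auto
  have "(\<Sum>j\<in>F. \<Prod>i\<in>UNIV. h (j i)) \<le> (\<Sum>j\<in>PiE (UNIV::'d set) (\<lambda>_. {..m}). \<Prod>i\<in>UNIV. h (j i))"
  proof (rule sum_mono2)
    show "finite (PiE UNIV (\<lambda>_::'d. {..m}))" by (intro finite_PiE) auto
    show "F \<subseteq> PiE UNIV (\<lambda>_. {..m})" by (rule sub)
    show "0 \<le> (\<Prod>i\<in>UNIV. h (j i))" for j using h0 by (intro prod_nonneg) auto
  qed
  also have "\<dots> = (\<Prod>i\<in>(UNIV::'d set). \<Sum>t\<in>{..m}. h t)"
    by (subst prod_sum_PiE) auto
  also have "\<dots> \<le> (\<Prod>i\<in>(UNIV::'d set). suminf h)"
    using h0 hs by (intro prod_mono conjI sum_nonneg sum_le_suminf) auto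
  also have "\<dots> = (suminf h) ^ CARD('d)" by simp
  finally show ?thesis .
qed

context NAd begin

definition th :: real where "th = 1 + \<delta> / (4 * (1 + \<delta>))"
definition gridN :: "('d \<Rightarrow> nat) \<Rightarrow> ('d \<Rightarrow> nat)" where "gridN j = (\<lambda>i. nat \<lfloor>th ^ j i\<rfloor>)"
definition hh :: "nat \<Rightarrow> real" where "hh t = 1 / (max 1 (ln (real (nat \<lfloor>th ^ t\<rfloor>))))\<^sup>2"

lemma th_gt1: "1 < th" unfolding th_def using dpos by simp

lemma th_mult: "(1 + \<delta>) * th = 1 + 5 * \<delta> / 4"
  unfolding th_def using dpos by (simp add: field_simps)

lemma gridN_ge1: "1 \<le> gridN j i"
proof -
  have "1 \<le> th ^ j i" using th_gt1 by simp
  then show ?thesis unfolding gridN_def by linarith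
qed

lemma hh_nonneg: "0 \<le> hh t" unfolding hh_def by simp

lemma hh_summable: "summable hh"
proof -
  define a where "a = ln th"
  have a0: "0 < a" unfolding a_def using th_gt1 by simp
  define T where "T = nat \<lceil>2 * ln 2 / a\<rceil> + 1"
  have g: "summable (\<lambda>t. (4 / a\<^sup>2) * inverse (real t ^ 2))"
    by (intro summable_mult inverse_power_summable) auto
  show ?thesis
  proof (rule summable_comparison_test'[OF g])
    fix t assume t: "T \<le> t"
    have t1: "1 \<le> t" using t unfolding T_def by simp
    have "2 * ln 2 / a \<le> real t" using t unfolding T_def by linarith
    then have ta: "2 * ln 2 \<le> real t * a" using a0 by (simp add: field_simps)
    have tht: "th ^ t = exp (real t * a)"
    proof -
      have "exp (real t * a) = exp a ^ t" by (rule exp_of_nat_mult)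
      also have "exp a = th" unfolding a_def using th_gt1 by simp
      finally show ?thesis by simp
    qed
    have "exp (2 * ln 2) \<le> th ^ t" unfolding tht using ta by simp
    moreover have "exp (2 * ln 2) = (4::real)"
    proof -
      have "exp (real 2 * ln 2) = exp (ln (2::real)) ^ 2" by (rule exp_of_nat_mult)
      then show ?thesis by simp
    qed
    ultimately have th4: "4 \<le> th ^ t" by simp
    have fl: "th ^ t / 2 \<le> real (nat \<lfloor>th ^ t\<rfloor>)" using th4 by linarith
    have "ln (th ^ t / 2) \<le> ln (real (nat \<lfloor>th ^ t\<rfloor>))"
      using fl th4 by (subst ln_le_cancel_iff) auto
    moreover have "ln (th ^ t / 2) = real t * a - ln 2"
      using th4 by (simp add: ln_div tht)
    ultimately have "real t * a / 2 \<le> ln (real (nat \<lfloor>th ^ t\<rfloor>))" using ta by linarith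
    then have m: "real t * a / 2 \<le> max 1 (ln (real (nat \<lfloor>th ^ t\<rfloor>)))" by linarith
    have p: "0 < real t * a / 2" using t1 a0 by simp
    have "hh t = 1 / (max 1 (ln (real (nat \<lfloor>th ^ t\<rfloor>))))\<^sup>2" by (simp add: hh_def)
    also have "\<dots> \<le> 1 / (real t * a / 2)\<^sup>2"
      using m p t1 a0 by (intro divide_left_mono power_mono mult_pos_pos) auto
    also have "\<dots> = (4 / a\<^sup>2) * inverse (real t ^ 2)"
      using a0 t1 by (simp add: field_simps power2_eq_square)
    finally show "norm (hh t) \<le> (4 / a\<^sup>2) * inverse (real t ^ 2)" using hh_nonneg[of t] by simp
  qed
qed

lemma Pn_ge_coord:
  assumes "\<And>i. 1 \<le> N i" shows "real (N i) \<le> Pn N"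
proof -
  have "Pn N = real (N i) * (\<Prod>i'\<in>UNIV - {i}. real (N i'))"
    unfolding Pn_def by (subst prod.remove[of UNIV i]) auto
  moreover have "1 \<le> (\<Prod>i'\<in>UNIV - {i}. real (N i'))" using assms by (intro prod_ge_1) auto
  moreover have "0 \<le> real (N i)" by simp
  ultimately show ?thesis by (metis mult_cancel_left1 mult_left_mono)
qed

lemma ell_ge_ln:
  assumes "\<And>i. 1 \<le> N i" shows "max 1 (ln (real (N i))) \<le> ell N"
proof -
  have n1: "1 \<le> real (N i)" using assms[of i] by simp
  have "ln (real (N i)) \<le> ln (max (Pn N) (exp 1))"
    using Pn_ge_coord[of N i, OF assms] n1 by (subst ln_le_cancel_iff) auto
  then show ?thesis using ell_ge1[of N] unfolding ell_def Lg_def by simp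
qed

lemma inv_ell: "1 / ell (gridN j) ^ (2 * CARD('d)) \<le> (\<Prod>i\<in>UNIV. hh (j i))"
proof -
  have e: "1 / ell (gridN j) ^ (2 * CARD('d)) = (\<Prod>i\<in>(UNIV::'d set). 1 / (ell (gridN j))\<^sup>2)"
    by (simp add: power_mult power_one_over)
  have "(\<Prod>i\<in>(UNIV::'d set). 1 / (ell (gridN j))\<^sup>2) \<le> (\<Prod>i\<in>UNIV. hh (j i))"
  proof (intro prod_mono conjI)
    fix i
    show "0 \<le> 1 / (ell (gridN j))\<^sup>2" by simp
    have m: "max 1 (ln (real (gridN j i))) \<le> ell (gridN j)" by (rule ell_ge_ln) (rule gridN_ge1)
    have "1 / (ell (gridN j))\<^sup>2 \<le> 1 / (max 1 (ln (real (gridN j i))))\<^sup>2"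
      using m by (intro divide_left_mono power_mono) auto
    then show "1 / (ell (gridN j))\<^sup>2 \<le> hh (j i)" unfolding hh_def gridN_def by simp
  qed
  then show ?thesis using e by simp
qed

end

context NAd begin

definition good :: "('d \<Rightarrow> nat) \<Rightarrow> bool" where
  "good j \<longleftrightarrow> exp 1 \<le> Pn (gridN j) \<and> Qc \<le> sqrt (Pn (gridN j))"
definition EE :: "('d \<Rightarrow> nat) \<Rightarrow> 'a set" where
  "EE j = (if good j then EvA (gridN j) \<union> EvB (gridN j) else {})"

lemma psum_meas: "partial_sum X m \<in> borel_measurable M"
proof -
  have "partial_sum X m = (\<lambda>\<omega>. \<Sum>k\<in>box m. X k \<omega>)" by (rule ext) (rule psum_box)
  then show ?thesis using sum_meas[OF box_posidx] by simp
qed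

lemma diff_set_meas: "{\<omega>\<in>space M. c \<le> \<bar>partial_sum X m \<omega> - partial_sum X m' \<omega>\<bar>} \<in> sets M"
  by (intro abs_set_meas borel_measurable_diff psum_meas)

lemma EvA_meas: "EvA N \<in> sets M"
proof -
  have "EvA N = (\<Union>g\<in>GG N. {\<omega>\<in>space M. lam N \<le> \<bar>partial_sum X (\<lambda>i. N i + g i) \<omega> - partial_sum X N \<omega>\<bar>})"
    unfolding EvA_def by auto
  also have "\<dots> \<in> sets M" using finite_GG diff_set_meas by auto
  finally show ?thesis .
qed

lemma EvB_meas: "EvB N \<in> sets M"
proof -
  have "EvB N = (\<Union>k\<in>KK N. {\<omega>\<in>space M. lam N \<le> \<bar>partial_sum X (\<lambda>i. N i + k i) \<omega> - partial_sum X (\<lambda>i. N i + rnd N k i) \<omega>\<bar>})"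
    unfolding EvB_def by auto
  also have "\<dots> \<in> sets M" using finite_KK diff_set_meas by auto
  finally show ?thesis .
qed

lemma EE_meas: "EE j \<in> sets M"
  unfolding EE_def using EvA_meas EvB_meas by auto

definition "Cst = 2 * (2 * D * dr + 7) ^ CARD('d) + 2 * (1 + D) ^ CARD('d)"

lemma EE_bound: "prob (EE j) \<le> Cst * (\<Prod>i\<in>UNIV. hh (j i))"
proof (cases "good j")
  case False
  then have "prob (EE j) = 0" unfolding EE_def by simp
  also have "0 \<le> Cst * (\<Prod>i\<in>UNIV. hh (j i))"
    unfolding Cst_def using D_pos dr_ge1 hh_nonneg by (intro mult_nonneg_nonneg prod_nonneg) auto
  finally show ?thesis .
next
  case True
  define N where "N = gridN j"
  have N1: "\<And>i. 1 \<le> N i" unfolding N_def by (rule gridN_ge1)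
  have Pe: "exp 1 \<le> Pn N" and PQ: "Qc \<le> sqrt (Pn N)" using True unfolding good_def N_def by auto
  have "prob (EE j) \<le> prob (EvA N) + prob (EvB N)"
    unfolding EE_def N_def using True EvA_meas EvB_meas by (simp add: measure_Un_le)
  also have "\<dots> \<le> 2 * (2 * D * dr + 7) ^ CARD('d) / ell N ^ (2 * CARD('d))
                 + 2 * (1 + D) ^ CARD('d) / ell N ^ (2 * CARD('d))"
    by (intro add_mono probA probB N1 Pe PQ)
  also have "\<dots> = Cst * (1 / ell N ^ (2 * CARD('d)))" unfolding Cst_def by (simp add: add_divide_distrib)
  also have "\<dots> \<le> Cst * (\<Prod>i\<in>UNIV. hh (j i))"
    unfolding N_def using D_pos dr_ge1 by (intro mult_left_mono inv_ell) (auto simp: Cst_def)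
  finally show ?thesis .
qed

lemma AE_fin: "AE \<omega> in M. finite {j. \<omega> \<in> EE j}"
proof (rule BC_countable[where B = "Cst * (suminf hh) ^ CARD('d)"])
  show "EE j \<in> sets M" for j by (rule EE_meas)
  fix F :: "('d \<Rightarrow> nat) set" assume F: "finite F"
  have "(\<Sum>j\<in>F. prob (EE j)) \<le> (\<Sum>j\<in>F. Cst * (\<Prod>i\<in>UNIV. hh (j i)))"
    by (intro sum_mono EE_bound)
  also have "\<dots> = Cst * (\<Sum>j\<in>F. \<Prod>i\<in>UNIV. hh (j i))" by (simp add: sum_distrib_left)
  also have "\<dots> \<le> Cst * (suminf hh) ^ CARD('d)"
    using D_pos dr_ge1 by (intro mult_left_mono sum_prod_bound hh_nonneg hh_summable F) (auto simp: Cst_def)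
  finally show "(\<Sum>j\<in>F. prob (EE j)) \<le> Cst * (suminf hh) ^ CARD('d)" .
qed

lemma det_bound:
  assumes \<omega>: "\<omega> \<in> space M" and A: "\<omega> \<notin> EvA N" and B: "\<omega> \<notin> EvB N" and k: "k \<in> KK N"
  shows "\<bar>partial_sum X (\<lambda>i. N i + k i) \<omega> - partial_sum X N \<omega>\<bar> \<le> 2 * lam N"
proof -
  have g: "rnd N k \<in> GG N" using k by (rule rnd_in_GG)
  have a: "\<bar>partial_sum X (\<lambda>i. N i + rnd N k i) \<omega> - partial_sum X N \<omega>\<bar> < lam N"
    using A \<omega> g unfolding EvA_def by (auto simp: not_le)
  have b: "\<bar>partial_sum X (\<lambda>i. N i + k i) \<omega> - partial_sum X (\<lambda>i. N i + rnd N k i) \<omega>\<bar> < lam N"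
    using B \<omega> k unfolding EvB_def by (auto simp: not_le)
  show ?thesis using a b by linarith
qed

end

lemma ev_multi:
  assumes "\<And>n. (\<And>i. M \<le> n i) \<Longrightarrow> P n"
  shows "eventually P (multi_at_top :: ('d::finite \<Rightarrow> nat) filter)"
  unfolding multi_at_top_def
proof (subst eventually_INF_finite)
  show "finite (UNIV :: 'd set)" by simp
  show "\<exists>Q. (\<forall>x\<in>UNIV. eventually (Q x) (filtercomap (\<lambda>n. n x) at_top)) \<and> (\<forall>y. (\<forall>x\<in>UNIV. Q x y) \<longrightarrow> P y)"
    by (rule exI[of _ "\<lambda>i n. M \<le> n i"])
       (auto simp: eventually_filtercomap_at_top_linorder assms)
qed

lemma max_incr_props:
  fixes X :: "('d::finite \<Rightarrow> nat) \<Rightarrow> 'a \<Rightarrow> real"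
  assumes "0 \<le> \<delta>"
  shows "0 \<le> max_incr X \<delta> n \<omega>"
    and "0 \<le> B \<Longrightarrow> (\<And>k. k \<in> posidx \<Longrightarrow> (\<forall>i. real (k i) \<le> \<delta> * real (n i)) \<Longrightarrow>
          \<bar>partial_sum X (\<lambda>i. n i + k i) \<omega> - partial_sum X n \<omega>\<bar> \<le> B) \<Longrightarrow> max_incr X \<delta> n \<omega> \<le> B"
proof -
  define S where "S = {\<bar>partial_sum X (\<lambda>i. n i + k i) \<omega> - partial_sum X n \<omega>\<bar> | k.
        k \<in> posidx \<and> (\<forall>i. real (k i) \<le> \<delta> * real (n i))}"
  have "finite {k. \<forall>i. real (k i) \<le> \<delta> * real (n i) \<and> (\<lambda>_. 1::nat) i dvd k i}"
    using assms by (intro card_grid(1)[where s="\<lambda>_. 1" and A="\<lambda>i. \<delta> * real (n i)"]) auto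
  then have fk: "finite {k. \<forall>i. real (k i) \<le> \<delta> * real (n i)}" by simp
  have "S \<subseteq> (\<lambda>k. \<bar>partial_sum X (\<lambda>i. n i + k i) \<omega> - partial_sum X n \<omega>\<bar>) ` {k. \<forall>i. real (k i) \<le> \<delta> * real (n i)}"
    unfolding S_def by auto
  moreover have "finite ((\<lambda>k. \<bar>partial_sum X (\<lambda>i. n i + k i) \<omega> - partial_sum X n \<omega>\<bar>) ` {k. \<forall>i. real (k i) \<le> \<delta> * real (n i)})"
    using fk by (rule finite_imageI)
  ultimately have "finite S" by (rule finite_subset)
  then have fS: "finite (S \<union> {0})" by simp
  have mi: "max_incr X \<delta> n \<omega> = Max (S \<union> {0})" unfolding max_incr_def S_def by simp
  show "0 \<le> max_incr X \<delta> n \<omega>" unfolding mi using fS by (intro Max_ge) auto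
  assume B: "0 \<le> B" and H: "\<And>k. k \<in> posidx \<Longrightarrow> (\<forall>i. real (k i) \<le> \<delta> * real (n i)) \<Longrightarrow>
          \<bar>partial_sum X (\<lambda>i. n i + k i) \<omega> - partial_sum X n \<omega>\<bar> \<le> B"
  show "max_incr X \<delta> n \<omega> \<le> B" unfolding mi using fS B H
    by (subst Max_le_iff) (auto simp: S_def)
qed

context NAd begin

definition jn :: "('d \<Rightarrow> nat) \<Rightarrow> ('d \<Rightarrow> nat)" where
  "jn n = (\<lambda>i. nat \<lfloor>ln (real (n i)) / ln th\<rfloor>)"

lemma th_pow_exp: "th ^ j = exp (real j * ln th)"
proof -
  have "exp (real j * ln th) = exp (ln th) ^ j" by (rule exp_of_nat_mult)
  also have "exp (ln th) = th" using th_gt1 by simp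
  finally show ?thesis by simp
qed

lemma jn_bounds:
  assumes n1: "1 \<le> n i"
  shows "th ^ jn n i \<le> real (n i)" and "real (n i) < th ^ (jn n i + 1)"
proof -
  define a where "a = ln th"
  have a0: "0 < a" unfolding a_def using th_gt1 by simp
  define x where "x = ln (real (n i))"
  have x0: "0 \<le> x" unfolding x_def using n1 by simp
  have nx: "real (n i) = exp x" unfolding x_def using n1 by simp
  have j: "real (jn n i) = of_int \<lfloor>x / a\<rfloor>" unfolding jn_def x_def a_def
    using x0 a0 by (simp add: x_def a_def)
  have "real (jn n i) \<le> x / a" using j by linarith
  then have "real (jn n i) * a \<le> x" using a0 by (simp add: field_simps)
  then show "th ^ jn n i \<le> real (n i)" unfolding th_pow_exp nx a_def[symmetric] by simp
  have "x / a < real (jn n i) + 1" using j by linarith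
  then have "x < real (jn n i + 1) * a" using a0 by (simp add: field_simps)
  then show "real (n i) < th ^ (jn n i + 1)" unfolding th_pow_exp nx a_def[symmetric] by simp
qed

lemma gridN_jn:
  assumes n1: "1 \<le> n i"
  shows "gridN (jn n) i \<le> n i" and "real (n i) < th * (real (gridN (jn n) i) + 1)"
proof -
  have a: "th ^ jn n i \<le> real (n i)" by (rule jn_bounds(1)[of n i, OF n1])
  have "\<lfloor>th ^ jn n i\<rfloor> \<le> int (n i)" using a by linarith
  then show "gridN (jn n) i \<le> n i" unfolding gridN_def by simp
  have "real (n i) < th ^ (jn n i + 1)" by (rule jn_bounds(2)[of n i, OF n1])
  also have "\<dots> = th * th ^ jn n i" by simp
  also have "th ^ jn n i < real (gridN (jn n) i) + 1"
  proof -
    have "1 \<le> th ^ jn n i" using th_gt1 by simp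
    then show ?thesis unfolding gridN_def by linarith
  qed
  then have "th * th ^ jn n i < th * (real (gridN (jn n) i) + 1)" using th_gt1 by simp
  finally show "real (n i) < th * (real (gridN (jn n) i) + 1)" .
qed

lemma jn_big:
  assumes n1: "1 \<le> n i" and big: "th ^ (m + 1) \<le> real (n i)"
  shows "m < jn n i"
proof -
  define a where "a = ln th"
  have a0: "0 < a" unfolding a_def using th_gt1 by simp
  have "ln (th ^ (m + 1)) \<le> ln (real (n i))" using big th_gt1 n1 by (subst ln_le_cancel_iff) auto
  moreover have "ln (th ^ (m + 1)) = real (m + 1) * a" unfolding a_def by (rule ln_realpow)
  ultimately have "real (m + 1) * a \<le> ln (real (n i))" by simp
  then have "real (m + 1) \<le> ln (real (n i)) / a" using a0 by (simp add: field_simps)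
  then have "m + 1 \<le> nat \<lfloor>ln (real (n i)) / a\<rfloor>" by linarith
  then show ?thesis unfolding jn_def a_def by simp
qed

end

context NAd begin

lemma incr_bound:
  assumes n1: "\<And>i. 1 \<le> n i" and bigN: "\<And>i. (4 + 5 * \<delta>) / (3 * \<delta>) \<le> real (gridN (jn n) i)"
    and \<omega>: "\<omega> \<in> space M" and A: "\<omega> \<notin> EvA (gridN (jn n))" and B: "\<omega> \<notin> EvB (gridN (jn n))"
  shows "max_incr X \<delta> n \<omega> \<le> 4 * lam (gridN (jn n))"
proof -
  define N where "N = gridN (jn n)"
  have N1: "1 \<le> N i" for i unfolding N_def by (rule gridN_ge1)
  have Nle: "N i \<le> n i" for i unfolding N_def by (rule gridN_jn(1)[of n i, OF n1])
  have key: "(1 + \<delta>) * real (n i) - real (N i) \<le> D * real (N i)" for i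
  proof -
    have nup: "real (n i) < th * (real (N i) + 1)" unfolding N_def by (rule gridN_jn(2)[of n i, OF n1])
    have "(1 + \<delta>) * real (n i) \<le> (1 + \<delta>) * (th * (real (N i) + 1))"
      using nup dpos by (intro mult_left_mono) auto
    also have "\<dots> = (1 + 5 * \<delta> / 4) * (real (N i) + 1)" using th_mult by (simp add: mult.assoc[symmetric])
    finally have a: "(1 + \<delta>) * real (n i) \<le> (1 + 5 * \<delta> / 4) * (real (N i) + 1)" .
    have "(4 + 5 * \<delta>) / (3 * \<delta>) \<le> real (N i)" using bigN[of i] unfolding N_def .
    then have "4 + 5 * \<delta> \<le> 3 * \<delta> * real (N i)" using dpos by (simp add: field_simps)
    then have h1: "4 + 5 * \<delta> \<le> 3 * (\<delta> * real (N i))" by (simp add: mult.assoc)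
    have a': "(1 + \<delta>) * real (n i) \<le> (1 + 5 * \<delta> / 4) + real (N i) + 5 / 4 * (\<delta> * real (N i))"
      using a by (simp add: algebra_simps add_divide_distrib)
    have "(1 + \<delta>) * real (n i) - real (N i) \<le> 2 * (\<delta> * real (N i))" using h1 a' by linarith
    then show ?thesis unfolding D_def by (simp add: mult.assoc)
  qed
  have lam0: "0 \<le> lam N" using lam_sq(1)[of N] N1 by (simp add: less_imp_le)
  show ?thesis unfolding N_def[symmetric]
  proof (rule max_incr_props(2))
    show "0 \<le> \<delta>" using dpos by simp
    show "0 \<le> 4 * lam N" using lam0 by simp
    fix k assume k: "k \<in> posidx" and kd: "\<forall>i. real (k i) \<le> \<delta> * real (n i)"
    define c where "c = (\<lambda>i. n i + k i - N i)"
    define a where "a = (\<lambda>i. n i - N i)"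
    have cK: "c \<in> KK N" unfolding KK_def
    proof (clarify)
      fix i
      have "real (c i) = real (n i) + real (k i) - real (N i)" unfolding c_def using Nle[of i] by simp
      also have "\<dots> \<le> (1 + \<delta>) * real (n i) - real (N i)" using kd by (simp add: algebra_simps)
      also have "\<dots> \<le> D * real (N i)" by (rule key)
      finally show "real (c i) \<le> D * real (N i)" .
    qed
    have aK: "a \<in> KK N" unfolding KK_def
    proof (clarify)
      fix i
      have "real (a i) \<le> real (c i)" unfolding a_def c_def using Nle[of i] by simp
      also have "\<dots> \<le> D * real (N i)" using cK unfolding KK_def by simp
      finally show "real (a i) \<le> D * real (N i)" .
    qed
    have ec: "(\<lambda>i. N i + c i) = (\<lambda>i. n i + k i)"
    proof (rule ext)
      fix i show "N i + c i = n i + k i" unfolding c_def using Nle[of i] by simp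
    qed
    have ea: "(\<lambda>i. N i + a i) = n"
    proof (rule ext)
      fix i show "N i + a i = n i" unfolding a_def using Nle[of i] by simp
    qed
    have 1: "\<bar>partial_sum X (\<lambda>i. n i + k i) \<omega> - partial_sum X N \<omega>\<bar> \<le> 2 * lam N"
      using det_bound[OF \<omega> A[unfolded N_def[symmetric]] B[unfolded N_def[symmetric]] cK] unfolding ec .
    have 2: "\<bar>partial_sum X n \<omega> - partial_sum X N \<omega>\<bar> \<le> 2 * lam N"
      using det_bound[OF \<omega> A[unfolded N_def[symmetric]] B[unfolded N_def[symmetric]] aK] unfolding ea .
    show "\<bar>partial_sum X (\<lambda>i. n i + k i) \<omega> - partial_sum X n \<omega>\<bar> \<le> 4 * lam N"
      using 1 2 by linarith
  qed
qed

lemma ratio: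
  assumes N1: "\<And>i. 1 \<le> N i" and le: "\<And>i. N i \<le> n i" and x0: "0 \<le> x" and xl: "x \<le> 4 * lam N"
  shows "x / sqrt (2 * real CARD('d) * real (\<Prod>i\<in>UNIV. n i) * Lg (Lg (real (\<Prod>i\<in>UNIV. n i))))
         \<le> 4 * sig * sqrt (2 * cA * u)"
proof -
  define P where "P = Pn N"
  define Q where "Q = real (\<Prod>i\<in>UNIV. n i)"
  have P1: "1 \<le> P" unfolding P_def using N1 by (rule Pn_ge1)
  have PQ: "P \<le> Q" unfolding P_def Q_def Pn_def of_nat_prod using le by (intro prod_mono) auto
  have LL1: "1 \<le> LL N" by (rule LL_ge1)
  have LLQ: "LL N \<le> Lg (Lg Q)" unfolding LL_def ell_def P_def[symmetric] using PQ by (intro Lg_mono)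
  define den0 where "den0 = sqrt (2 * dr * P * LL N)"
  have den00: "0 < den0" unfolding den0_def using dr_ge1 P1 LL1 by simp
  have "den0 \<le> sqrt (2 * real CARD('d) * Q * Lg (Lg Q))"
    unfolding den0_def dr_def using PQ LLQ P1 LL1
    by (intro real_sqrt_le_mono mult_mono) auto
  moreover have "0 < sqrt (2 * real CARD('d) * Q * Lg (Lg Q))"
    using P1 PQ Lg_pos[of "Lg Q"] by simp
  ultimately have "x / sqrt (2 * real CARD('d) * Q * Lg (Lg Q)) \<le> x / den0"
    using den00 x0 by (intro divide_left_mono mult_pos_pos) auto
  also have "\<dots> \<le> 4 * lam N / den0" using xl den00 by (intro divide_right_mono) auto
  also have "lam N / den0 = sig * sqrt (2 * cA * u)"
  proof -
    have "lam N / den0 = sqrt (4 * cA * sig\<^sup>2 * dr * u * P * LL N) / sqrt (2 * dr * P * LL N)"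
      unfolding lam_def den0_def P_def by simp
    also have "\<dots> = sqrt (4 * cA * sig\<^sup>2 * dr * u * P * LL N / (2 * dr * P * LL N))"
      by (rule real_sqrt_divide[symmetric])
    also have "4 * cA * sig\<^sup>2 * dr * u * P * LL N / (2 * dr * P * LL N) = sig\<^sup>2 * (2 * cA * u)"
      using dr_ge1 P1 LL1 by (simp add: field_simps)
    also have "sqrt (sig\<^sup>2 * (2 * cA * u)) = sig * sqrt (2 * cA * u)"
      using sigpos by (simp add: real_sqrt_mult)
    finally show ?thesis .
  qed
  then have "4 * lam N / den0 = 4 * sig * sqrt (2 * cA * u)" by (simp add: mult.assoc)
  finally show ?thesis unfolding Q_def .
qed

end

context NAd begin

lemma main_NAd:
  "AE \<omega> in M. Limsup multi_at_top (\<lambda>n. ereal (max_incr X \<delta> n \<omega> /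
      sqrt (2 * real CARD('d) * real (\<Prod>i\<in>UNIV. n i) * Lg (Lg (real (\<Prod>i\<in>UNIV. n i))))))
    \<le> ereal (4 * sig * sqrt (2 * cA * u))"
  using AE_fin AE_space
proof eventually_elim
  case (elim \<omega>)
  then have fin: "finite {j. \<omega> \<in> EE j}" and sp: "\<omega> \<in> space M" by auto
  define i0 :: 'd where "i0 = undefined"
  have "finite ((\<lambda>j. j i0) ` {j. \<omega> \<in> EE j})" using fin by simp
  then have "\<exists>m. \<forall>x\<in>(\<lambda>j. j i0) ` {j. \<omega> \<in> EE j}. x \<le> m"
    by (rule finite_nat_set_iff_bounded_le[THEN iffD1])
  then obtain m where m: "\<And>j. \<omega> \<in> EE j \<Longrightarrow> j i0 \<le> m" by auto
  define N0 where "N0 = (4 + 5 * \<delta>) / (3 * \<delta>)"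
  define T where "T = max (exp 1) (Qc\<^sup>2)"
  define Bd where "Bd = max (th ^ (m + 1)) (max (th * (N0 + 1)) (th * (T + 1)))"
  define Mn where "Mn = max 1 (nat \<lceil>Bd\<rceil>)"
  show ?case
  proof (rule Limsup_bounded, rule ev_multi[of Mn])
    fix n :: "'d \<Rightarrow> nat" assume hn: "\<And>i. Mn \<le> n i"
    have n1: "1 \<le> n i" for i using hn[of i] unfolding Mn_def by simp
    have nB: "Bd \<le> real (n i)" for i
    proof -
      have "nat \<lceil>Bd\<rceil> \<le> n i" using hn[of i] unfolding Mn_def by simp
      then show ?thesis by linarith
    qed
    define N where "N = gridN (jn n)"
    have N1: "1 \<le> N i" for i unfolding N_def by (rule gridN_ge1)
    have Nle: "N i \<le> n i" for i unfolding N_def by (rule gridN_jn(1)[of n i, OF n1])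
    have Nup: "real (n i) < th * (real (N i) + 1)" for i unfolding N_def by (rule gridN_jn(2)[of n i, OF n1])
    have gt: "c < real (N i)" if "th * (c + 1) \<le> real (n i)" for c i
    proof -
      have "th * (c + 1) < th * (real (N i) + 1)" using that Nup[of i] by linarith
      then show ?thesis using th_gt1 by simp
    qed
    have NN0: "N0 \<le> real (N i)" for i using gt[of N0 i] nB[of i] unfolding Bd_def by (simp add: less_imp_le)
    have NT: "T < real (N i0)" using gt[of T i0] nB[of i0] unfolding Bd_def by simp
    have Pbig: "T < Pn N" using NT Pn_ge_coord[of N i0] N1 by force
    have good: "good (jn n)"
      unfolding good_def N_def[symmetric]
    proof
      show "exp 1 \<le> Pn N" using Pbig unfolding T_def by simp
      have "Qc \<le> sqrt (Qc\<^sup>2)" by simp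
      also have "\<dots> \<le> sqrt (Pn N)" using Pbig unfolding T_def by (intro real_sqrt_le_mono) simp
      finally show "Qc \<le> sqrt (Pn N)" .
    qed
    have "m < jn n i0" by (rule jn_big[OF n1]) (use nB[of i0] in \<open>simp add: Bd_def\<close>)
    then have "\<omega> \<notin> EE (jn n)" using m[of "jn n"] by linarith
    then have A: "\<omega> \<notin> EvA N" and B: "\<omega> \<notin> EvB N" using good unfolding EE_def N_def by auto
    have mi: "max_incr X \<delta> n \<omega> \<le> 4 * lam N"
      unfolding N_def
      by (rule incr_bound[OF n1 _ sp]) (use NN0 A B in \<open>auto simp: N0_def N_def\<close>)
    have "max_incr X \<delta> n \<omega> / sqrt (2 * real CARD('d) * real (\<Prod>i\<in>UNIV. n i) * Lg (Lg (real (\<Prod>i\<in>UNIV. n i))))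
        \<le> 4 * sig * sqrt (2 * cA * u)"
      by (rule ratio[OF N1 Nle]) (use mi max_incr_props(1)[of \<delta> X n \<omega>] dpos in auto)
    then show "ereal (max_incr X \<delta> n \<omega> / sqrt (2 * real CARD('d) * real (\<Prod>i\<in>UNIV. n i) * Lg (Lg (real (\<Prod>i\<in>UNIV. n i)))))
        \<le> ereal (4 * sig * sqrt (2 * cA * u))" by simp
  qed
qed

lemma const_le: "4 * sig * sqrt (2 * cA * u) \<le> 80 * real CARD('d) * sqrt (\<delta> * (1 + 2 * \<delta>) ^ CARD('d)) * sig"
proof -
  define w where "w = \<delta> * (1 + 2 * \<delta>) ^ CARD('d)"
  have w0: "0 \<le> w" unfolding w_def using dpos by simp
  have "2 * cA * u = (12 * dr) * w" unfolding cA_def u_def D_def w_def by (simp add: algebra_simps)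
  then have "sqrt (2 * cA * u) = sqrt ((12 * dr) * w)" by (simp only:)
  also have "\<dots> = sqrt (12 * dr) * sqrt w" by (rule real_sqrt_mult)
  also have "sqrt (12 * dr) \<le> 20 * dr"
  proof -
    have "12 * dr \<le> (20 * dr)\<^sup>2" using dr_ge1 by (simp add: power2_eq_square)
    then have "sqrt (12 * dr) \<le> sqrt ((20 * dr)\<^sup>2)" by (rule real_sqrt_le_mono)
    also have "\<dots> = 20 * dr" using dr_ge1 by (subst real_sqrt_abs) simp
    finally show ?thesis .
  qed
  then have "sqrt (12 * dr) * sqrt w \<le> 20 * dr * sqrt w" using w0 by (intro mult_right_mono) auto
  finally have "sqrt (2 * cA * u) \<le> 20 * dr * sqrt w" .
  then have "4 * sig * sqrt (2 * cA * u) \<le> 4 * sig * (20 * dr * sqrt w)"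
    using sigpos by (intro mult_left_mono) auto
  also have "\<dots> = 80 * real CARD('d) * sqrt (\<delta> * (1 + 2 * \<delta>) ^ CARD('d)) * sig"
    unfolding w_def dr_def by simp
  finally show ?thesis .
qed

end

lemma (in NAfield) zero_case:
  assumes s0: "sig = 0" and d0: "0 < \<delta>"
  shows "AE \<omega> in M.
     Limsup multi_at_top
       (\<lambda>n. ereal (max_incr X \<delta> n \<omega> /
          sqrt (2 * real CARD('d) * real (\<Prod>i\<in>UNIV. n i) * Lg (Lg (real (\<Prod>i\<in>UNIV. n i))))))
     \<le> ereal (80 * real CARD('d) * sqrt (\<delta> * (1 + 2 * \<delta>) ^ CARD('d)) * sig)"
proof -
  have z: "AE \<omega> in M. X k \<omega> = 0" if k: "k \<in> posidx" for k
  proof -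
    have "(LINT \<omega>|M. (X k \<omega>)\<^sup>2) \<le> 0" using var_le_sig[OF k] s0 by simp
    moreover have "0 \<le> (LINT \<omega>|M. (X k \<omega>)\<^sup>2)" by (rule integral_nonneg_AE) auto
    ultimately have "(LINT \<omega>|M. (X k \<omega>)\<^sup>2) = 0" by linarith
    then have "AE \<omega> in M. (X k \<omega>)\<^sup>2 = 0"
      using integral_nonneg_eq_0_iff_AE[OF sq_integrable[OF k]] by simp
    then show ?thesis by simp
  qed
  have "AE \<omega> in M. \<forall>k\<in>posidx. X k \<omega> = 0"
    by (rule AE_ball_countable[THEN iffD2]) (auto intro: z)
  then show ?thesis
  proof eventually_elim
    case (elim \<omega>)
    have ps: "partial_sum X m \<omega> = 0" for m
      unfolding psum_box using elim box_posidx by (auto intro!: sum.neutral)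
    have "max_incr X \<delta> n \<omega> \<le> 0" for n
      by (rule max_incr_props(2)) (use d0 ps in auto)
    moreover have "0 \<le> max_incr X \<delta> n \<omega>" for n by (rule max_incr_props(1)) (use d0 in auto)
    ultimately have "max_incr X \<delta> n \<omega> = 0" for n by (intro antisym)
    then show ?case using s0 by (intro Limsup_bounded) auto
  qed
qed

theorem lemma3p2:
  fixes M :: "'a measure" and X :: "('d::finite \<Rightarrow> nat) \<Rightarrow> 'a \<Rightarrow> real"
    and b \<delta> :: real
  assumes "prob_space M"
    and "\<And>k. k \<in> posidx \<Longrightarrow> X k \<in> borel_measurable M"
    and "neg_assoc M X posidx"
    and "\<And>k. k \<in> posidx \<Longrightarrow> (LINT \<omega>|M. X k \<omega>) = 0"
    and "0 < b"
    and "\<And>k. k \<in> posidx \<Longrightarrow> (AE \<omega> in M. \<bar>X k \<omega>\<bar> \<le> b)"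
    and "0 < \<delta>"
  shows "AE \<omega> in M.
     Limsup multi_at_top
       (\<lambda>n. ereal (max_incr X \<delta> n \<omega> /
          sqrt (2 * real CARD('d) * real (\<Prod>i\<in>UNIV. n i) * Lg (Lg (real (\<Prod>i\<in>UNIV. n i))))))
     \<le> ereal (80 * real CARD('d) * sqrt (\<delta> * (1 + 2 * \<delta>) ^ CARD('d))
          * (SUP k\<in>posidx. sqrt (LINT \<omega>|M. (X k \<omega>)\<^sup>2)))"
proof -
  interpret NA: NAfield M X b
    using assms(1-6) by (intro NAfield.intro NAfield_axioms.intro) auto
  have sigeq: "(SUP k\<in>posidx. sqrt (LINT \<omega>|M. (X k \<omega>)\<^sup>2)) = NA.sig" by (simp add: NA.sig_def)
  have main: "AE \<omega> in M.
     Limsup multi_at_top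
       (\<lambda>n. ereal (max_incr X \<delta> n \<omega> /
          sqrt (2 * real CARD('d) * real (\<Prod>i\<in>UNIV. n i) * Lg (Lg (real (\<Prod>i\<in>UNIV. n i))))))
     \<le> ereal (80 * real CARD('d) * sqrt (\<delta> * (1 + 2 * \<delta>) ^ CARD('d)) * NA.sig)"
  proof (cases "NA.sig = 0")
    case True
    then show ?thesis by (rule NA.zero_case) (rule assms(7))
  next
    case False
    then have sp: "0 < NA.sig" using NA.sig_nonneg by simp
    interpret NB: NAd M X b \<delta>
      by (intro NAd.intro NAd_axioms.intro NA.NAfield_axioms) (use assms(7) sp in auto)
    show ?thesis using NB.main_NAd
    proof eventually_elim
      case (elim \<omega>)
      then show ?case using NB.const_le by (meson ereal_less_eq(3) order_trans)
    qed
  qed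
  then show ?thesis unfolding sigeq .
qed

end
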